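(* Let $k \geq 3$ and let $F$ be a $k$-edge graph with $\gamma(F)=1$. Let $\Gamma_1$ be a pure $(m_1,F)$-special graph and $\Gamma_2$ a pure $(m_2,F)$-special graph with $V(\Gamma_1)\cap V(\Gamma_2) = \emptyset$. Let $x \in V(\Gamma_1)$, $y \in V(\Gamma_2)$, let $\Gamma$ be the graph with vertex set $V(\Gamma_1)\cup V(\Gamma_2)$ and edge set $E(\Gamma_1)\cup E(\Gamma_2)\cup\{xy\}$, and let $m = |E(\Gamma)|$. If $\iota(\Gamma,F) = \frac{m+1}{k+2}$, then $\Gamma$ is an $(m,F)$-special graph.
   Context: All graphs are finite and simple. For $D \subseteq V(G)$, $N_G[D]$ is the closed neighbourhood of $D$. A set $D \subseteq V(G)$ is an $F$-isolating set of $G$ if $G - N_G[D]$ contains no subgraph isomorphic to $F$; $\iota(G,F)$ is the minimum size of such a set. $\gamma(F)=1$ means $F$ has a vertex adjacent to all other vertices of $F$. ($m,F$)-special graphs: let $F$ be a connected $k$-edge graph. Write $m+1 = q(k+2)+r$ with integers $q \ge 0$, $0 \le r \le k+1$. If $q = 0$, an $(m,F)$-special graph is any connected $m$-edge graph. If $q \geq 1$, take distinct vertices $v_1,\dots,v_q$, copies $F_1,\dots,F_q$ of $F$ such that $V(F_1),\dots,V(F_q),\{v_1,\dots,v_q\}$ are pairwise disjoint, vertices $w_i \in V(F_i)$, and let $G_i$ be the graph with vertex set $\{v_i\}\cup V(F_i)$ and edge set $E(F_i)\cup\{v_iw_i\}$. Let $T$ be a tree with vertex set $\{v_1,\dots,v_q\}$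 (the quotient graph) and $T'$ a connected $r$-edge graph with $V(T') \cap \bigcup_i V(G_i) = \{v_q\}$ (the remainder graph). The graph with vertex set $V(T')\cup\bigcup_i V(G_i)$ and edge set $E(T)\cup E(T')\cup \bigcup_i E(G_i)$ is an $(m,F)$-special graph. It is pure if $q\ge1$ and $T'$ has no edges (so $m+1=q(k+2)$). *)

theory Defs
  imports Complex_Main
begin

type_synonym 'a graph = "'a set \<times> 'a set set"

definition verts :: "'a graph \<Rightarrow> 'a set" where "verts G = fst G"
definition edges :: "'a graph \<Rightarrow> 'a set set" where "edges G = snd G"

definition graph :: "'a graph \<Rightarrow> bool" where
  "graph G \<longleftrightarrow> finite (verts G) \<and>
     (\<forall>e\<in>edges G. \<exists>u v. e = {u, v} \<and> u \<noteq> v \<and> u \<in> verts G \<and> v \<in> verts G)"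

definition adj_rel :: "'a graph \<Rightarrow> ('a \<times> 'a) set" where
  "adj_rel G = {(u, v). {u, v} \<in> edges G}"

definition connected_graph :: "'a graph \<Rightarrow> bool" where
  "connected_graph G \<longleftrightarrow> verts G \<noteq> {} \<and>
     (\<forall>u\<in>verts G. \<forall>v\<in>verts G. (u, v) \<in> (adj_rel G)\<^sup>*)"

definition acyclic_graph :: "'a graph \<Rightarrow> bool" where
  "acyclic_graph G \<longleftrightarrow> \<not> (\<exists>cs. length cs \<ge> 3 \<and> distinct cs \<and> set cs \<subseteq> verts G \<and>
     (\<forall>i<length cs. {cs ! i, cs ! ((i + 1) mod length cs)} \<in> edges G))"

definition tree :: "'a graph \<Rightarrow> bool" where
  "tree G \<longleftrightarrow> connected_graph G \<and> acyclic_graph G"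

definition iso :: "'a graph \<Rightarrow> 'b graph \<Rightarrow> bool" where
  "iso G H \<longleftrightarrow> (\<exists>f. bij_betw f (verts G) (verts H) \<and>
     (\<forall>u\<in>verts G. \<forall>v\<in>verts G. {u, v} \<in> edges G \<longleftrightarrow> {f u, f v} \<in> edges H))"

definition contains_copy :: "'a graph \<Rightarrow> 'b graph \<Rightarrow> bool" where
  "contains_copy G F \<longleftrightarrow> (\<exists>f. inj_on f (verts F) \<and> f ` verts F \<subseteq> verts G \<and>
     (\<forall>e\<in>edges F. f ` e \<in> edges G))"

definition closed_nbhd :: "'a graph \<Rightarrow> 'a set \<Rightarrow> 'a set" where
  "closed_nbhd G D = D \<union> {v \<in> verts G. \<exists>u\<in>D. {u, v} \<in> edges G}"

definition del_verts :: "'a graph \<Rightarrow> 'a set \<Rightarrow> 'a graph" where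
  "del_verts G X = (verts G - X, {e \<in> edges G. e \<subseteq> verts G - X})"

definition isolating :: "'a graph \<Rightarrow> 'b graph \<Rightarrow> 'a set \<Rightarrow> bool" where
  "isolating G F D \<longleftrightarrow> D \<subseteq> verts G \<and>
     \<not> contains_copy (del_verts G (closed_nbhd G D)) F"

definition iota :: "'a graph \<Rightarrow> 'b graph \<Rightarrow> nat" where
  "iota G F = (LEAST n. \<exists>D. isolating G F D \<and> card D = n)"

definition dom_one :: "'b graph \<Rightarrow> bool" where
  "dom_one F \<longleftrightarrow> (\<exists>c\<in>verts F. \<forall>u\<in>verts F - {c}. {c, u} \<in> edges F)"

text \<open>The construction of an (m,F)-special graph with parameters q \<ge> 1 and r
  (indices 0..q-1 instead of 1..q; so v_q becomes v (q-1)).\<close>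
definition special_constr :: "nat \<Rightarrow> 'b graph \<Rightarrow> 'a graph \<Rightarrow> nat \<Rightarrow> nat \<Rightarrow> bool" where
  "special_constr m F G q r \<longleftrightarrow>
     q \<ge> 1 \<and> r \<le> card (edges F) + 1 \<and> m + 1 = q * (card (edges F) + 2) + r \<and>
     (\<exists>v Fs w T T'.
        inj_on v {..<q} \<and>
        (\<forall>i<q. graph (Fs i) \<and> iso (Fs i) F \<and> w i \<in> verts (Fs i)) \<and>
        (\<forall>i<q. \<forall>j<q. i \<noteq> j \<longrightarrow> verts (Fs i) \<inter> verts (Fs j) = {}) \<and>
        (\<forall>i<q. \<forall>j<q. v j \<notin> verts (Fs i)) \<and>
        graph T \<and> tree T \<and> verts T = v ` {..<q} \<and>
        graph T' \<and> connected_graph T' \<and> card (edges T') = r \<and>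
        verts T' \<inter> (\<Union>i<q. insert (v i) (verts (Fs i))) = {v (q - 1)} \<and>
        G = (verts T' \<union> (\<Union>i<q. insert (v i) (verts (Fs i))),
             edges T \<union> edges T' \<union> (\<Union>i<q. insert {v i, w i} (edges (Fs i)))))"

definition special :: "nat \<Rightarrow> 'b graph \<Rightarrow> 'a graph \<Rightarrow> bool" where
  "special m F G \<longleftrightarrow>
     (m + 1 < card (edges F) + 2 \<and> graph G \<and> connected_graph G \<and> card (edges G) = m) \<or>
     (\<exists>q r. special_constr m F G q r)"

definition pure_special :: "nat \<Rightarrow> 'b graph \<Rightarrow> 'a graph \<Rightarrow> bool" where
  "pure_special m F G \<longleftrightarrow> (\<exists>q. special_constr m F G q 0)"

end

theory Submission
  imports Defs
begin


lemma graph_edge: "graph G \<Longrightarrow> e \<in> edges G \<Longrightarrow> \<exists>u v. e = {u, v} \<and> u \<noteq> v \<and> u \<in> verts G \<and> v \<in> verts G"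
  unfolding graph_def by blast

lemma graph_edge_sub: "graph G \<Longrightarrow> e \<in> edges G \<Longrightarrow> e \<subseteq> verts G"
  by (drule (1) graph_edge) auto

lemma graph_finite_edges: "graph G \<Longrightarrow> finite (edges G)"
proof -
  assume g: "graph G"
  have "edges G \<subseteq> Pow (verts G)" using graph_edge_sub[OF g] by blast
  moreover have "finite (verts G)" using g graph_def by blast
  ultimately show ?thesis by (simp add: finite_subset)
qed

lemma contains_mono:
  assumes "contains_copy G F" "verts G \<subseteq> verts G'" "edges G \<subseteq> edges G'"
  shows "contains_copy G' F"
proof -
  obtain f where f: "inj_on f (verts F)" "f ` verts F \<subseteq> verts G" "\<forall>e\<in>edges F. f ` e \<in> edges G"
    using assms(1) unfolding contains_copy_def by blast
  show ?thesis unfolding contains_copy_def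
    using f assms(2,3) by (intro exI[of _ f]) auto
qed

lemma few_edges_nocopy:
  assumes "graph F" "finite (edges G)" "card (edges G) < card (edges F)"
  shows "\<not> contains_copy G F"
proof
  assume "contains_copy G F"
  then obtain f where f: "inj_on f (verts F)" "f ` verts F \<subseteq> verts G" "\<forall>e\<in>edges F. f ` e \<in> edges G"
    unfolding contains_copy_def by blast
  have "inj_on ((`) f) (Pow (verts F))" using f(1) inj_on_image_Pow by blast
  moreover have "edges F \<subseteq> Pow (verts F)" using graph_edge_sub[OF assms(1)] by blast
  ultimately have "inj_on ((`) f) (edges F)" using inj_on_subset by blast
  moreover have "(`) f ` edges F \<subseteq> edges G" using f(3) by blast
  ultimately have "card (edges F) \<le> card (edges G)"
    using card_inj_on_le[of "(`) f" "edges F" "edges G"] assms(2) by simp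
  thus False using assms(3) by linarith
qed



lemma nocopy_local:
  assumes "graph F" "dom_one F"
    and S: "\<And>c. c \<in> verts H \<Longrightarrow> \<exists>S. c \<in> S \<and> (\<forall>u. {c, u} \<in> edges H \<longrightarrow> u \<in> S) \<and>
              \<not> contains_copy (verts H \<inter> S, {e\<in>edges H. e \<subseteq> S}) F"
  shows "\<not> contains_copy H F"
proof
  assume "contains_copy H F"
  then obtain f where f: "inj_on f (verts F)" "f ` verts F \<subseteq> verts H" "\<forall>e\<in>edges F. f ` e \<in> edges H"
    unfolding contains_copy_def by blast
  obtain c0 where c0: "c0 \<in> verts F" "\<forall>u\<in>verts F - {c0}. {c0, u} \<in> edges F"
    using assms(2) unfolding dom_one_def by blast
  have fc0: "f c0 \<in> verts H" using f(2) c0(1) by (simp add: image_subset_iff)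
  obtain S where S: "f c0 \<in> S" "\<forall>u. {f c0, u} \<in> edges H \<longrightarrow> u \<in> S"
     "\<not> contains_copy (verts H \<inter> S, {e\<in>edges H. e \<subseteq> S}) F" using assms(3)[OF fc0] by metis
  have inS: "f u \<in> S" if "u \<in> verts F" for u
  proof (cases "u = c0")
    case True thus ?thesis using S by simp
  next
    case False
    hence "{c0, u} \<in> edges F" using c0 that by blast
    hence "f ` {c0, u} \<in> edges H" using f by blast
    thus ?thesis using S(2) by simp
  qed
  have "contains_copy (verts H \<inter> S, {e\<in>edges H. e \<subseteq> S}) F"
    unfolding contains_copy_def verts_def[of "(_, _)"] edges_def[of "(_,_)"] fst_conv snd_conv
  proof (intro exI[of _ f] conjI ballI)
    show "inj_on f (verts F)" by (rule f(1))
    show "f ` verts F \<subseteq> verts H \<inter> S" using f(2) inS by auto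
    fix e assume e: "e \<in> edges F"
    have "f ` e \<subseteq> S" using graph_edge_sub[OF assms(1) e] inS by auto
    thus "f ` e \<in> {e \<in> edges H. e \<subseteq> S}" using f(3) e by simp
  qed
  thus False using S(3) by simp
qed



lemma iso_bij: "iso G H \<Longrightarrow> \<exists>f. bij_betw f (verts G) (verts H) \<and>
     (\<forall>u\<in>verts G. \<forall>v\<in>verts G. {u, v} \<in> edges G \<longleftrightarrow> {f u, f v} \<in> edges H)"
  unfolding iso_def by simp

lemma iso_card_edges:
  assumes "iso G H" "graph G" "graph H"
  shows "card (edges G) = card (edges H)"
proof -
  obtain f where f: "bij_betw f (verts G) (verts H)"
    "\<forall>u\<in>verts G. \<forall>v\<in>verts G. {u, v} \<in> edges G \<longleftrightarrow> {f u, f v} \<in> edges H"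
    using iso_bij[OF assms(1)] by blast
  have inj: "inj_on f (verts G)" using f(1) by (rule bij_betw_imp_inj_on)
  have img: "f ` verts G = verts H" using f(1) by (rule bij_betw_imp_surj_on)
  have "inj_on ((`) f) (Pow (verts G))" using inj inj_on_image_Pow by blast
  moreover have "edges G \<subseteq> Pow (verts G)" using graph_edge_sub[OF assms(2)] by blast
  ultimately have i2: "inj_on ((`) f) (edges G)" using inj_on_subset by blast
  have "(`) f ` edges G = edges H"
  proof
    show "(`) f ` edges G \<subseteq> edges H"
    proof
      fix e' assume "e' \<in> (`) f ` edges G"
      then obtain e where e: "e \<in> edges G" "e' = f ` e" by blast
      obtain u v where uv: "e = {u, v}" "u \<in> verts G" "v \<in> verts G" using graph_edge[OF assms(2) e(1)] by blast
      have "{f u, f v} \<in> edges H" using f(2) uv e(1) by simp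
      thus "e' \<in> edges H" using e(2) uv(1) by simp
    qed
    show "edges H \<subseteq> (`) f ` edges G"
    proof
      fix e' assume e': "e' \<in> edges H"
      obtain a b where ab: "e' = {a, b}" "a \<in> verts H" "b \<in> verts H" using graph_edge[OF assms(3) e'] by blast
      obtain u where u: "u \<in> verts G" "a = f u" using ab(2) img by (metis imageE)
      obtain v where v: "v \<in> verts G" "b = f v" using ab(3) img by (metis imageE)
      have "{u, v} \<in> edges G" using f(2) u(1) v(1) e' ab(1) u(2) v(2) by simp
      moreover have "e' = f ` {u, v}" using ab(1) u v by simp
      ultimately show "e' \<in> (`) f ` edges G" by (rule rev_image_eqI)
    qed
  qed
  thus ?thesis using card_image[OF i2] by simp
qed

lemma iso_card_verts:
  assumes "iso G H" shows "card (verts G) = card (verts H)"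
  using iso_bij[OF assms] bij_betw_same_card by blast

lemma iso_sym:
  assumes "iso G H" shows "iso H G"
proof -
  obtain f where f: "bij_betw f (verts G) (verts H)"
    "\<forall>u\<in>verts G. \<forall>v\<in>verts G. {u, v} \<in> edges G \<longleftrightarrow> {f u, f v} \<in> edges H"
    using iso_bij[OF assms(1)] by blast
  define g where "g = inv_into (verts G) f"
  have g: "bij_betw g (verts H) (verts G)" unfolding g_def using f(1) bij_betw_inv_into by blast
  have fg: "f (g a) = a" if "a \<in> verts H" for a
    unfolding g_def using f(1) that by (simp add: bij_betw_inv_into_right)
  have "\<forall>a\<in>verts H. \<forall>b\<in>verts H. {a, b} \<in> edges H \<longleftrightarrow> {g a, g b} \<in> edges G"
  proof (intro ballI)
    fix a b assume a: "a \<in> verts H" and b: "b \<in> verts H"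
    have "g a \<in> verts G" "g b \<in> verts G" using g a b bij_betwE by blast+
    thus "{a, b} \<in> edges H \<longleftrightarrow> {g a, g b} \<in> edges G" using f(2) fg[OF a] fg[OF b] by metis
  qed
  thus ?thesis unfolding iso_def using g by blast
qed

lemma dom_one_iso:
  assumes "iso G F" "dom_one F" shows "dom_one G"
proof -
  obtain f where f: "bij_betw f (verts G) (verts F)"
    "\<forall>u\<in>verts G. \<forall>v\<in>verts G. {u, v} \<in> edges G \<longleftrightarrow> {f u, f v} \<in> edges F"
    using iso_bij[OF assms(1)] by blast
  obtain c where c: "c \<in> verts F" "\<forall>u\<in>verts F - {c}. {c, u} \<in> edges F"
    using assms(2) unfolding dom_one_def by blast
  obtain c' where c': "c' \<in> verts G" "f c' = c" using f(1) c(1) bij_betw_def by (metis imageE)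
  have "\<forall>u\<in>verts G - {c'}. {c', u} \<in> edges G"
  proof
    fix u assume u: "u \<in> verts G - {c'}"
    have "f u \<noteq> c" using u c' f(1) by (metis DiffE bij_betw_def inj_on_contraD singletonI)
    moreover have "f u \<in> verts F" using u f(1) bij_betwE by blast
    ultimately have "{c, f u} \<in> edges F" using c(2) by blast
    thus "{c', u} \<in> edges G" using f(2) c' u by blast
  qed
  thus ?thesis unfolding dom_one_def using c' by blast
qed

lemma graph_two_edges_three_verts:
  assumes "graph G" "e1 \<in> edges G" "e2 \<in> edges G" "e1 \<noteq> e2" "y \<in> verts G" "z \<in> verts G"
  shows "\<exists>p\<in>verts G. p \<noteq> y \<and> p \<noteq> z"
proof (rule ccontr)
  assume "\<not> ?thesis"
  hence sub: "verts G \<subseteq> {y, z}" by blast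
  have "e1 = {y, z}" "e2 = {y, z}"
    using graph_edge[OF assms(1) assms(2)] graph_edge[OF assms(1) assms(3)] sub by auto
  thus False using assms(4) by simp
qed

lemma graph_edge_pair: "graph G \<Longrightarrow> {y, z} \<in> edges G \<Longrightarrow> y \<noteq> z \<and> y \<in> verts G \<and> z \<in> verts G"
proof -
  assume g: "graph G" and e: "{y, z} \<in> edges G"
  obtain u v where uv: "{y, z} = {u, v}" "u \<noteq> v" using graph_edge[OF g e] by blast
  have "y \<noteq> z"
  proof
    assume "y = z"
    hence "{u, v} = {y}" using uv(1) by simp
    hence "u = y" "v = y" by (simp_all add: insert_eq_iff)
    thus False using uv(2) by simp
  qed
  thus ?thesis using graph_edge_sub[OF g e] by simp
qed

lemma card_ge2_two: "finite A \<Longrightarrow> card A \<ge> 2 \<Longrightarrow> \<exists>a\<in>A. \<exists>b\<in>A. a \<noteq> b"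
  by (metis One_nat_def card.empty card_le_Suc0_iff_eq not_less_eq_eq numeral_2_eq_2 zero_le)

lemma dom_vertex_has_edge:
  assumes "graph G" "dom_one G" "card (edges G) \<ge> 1" "u \<in> verts G"
  shows "\<exists>z. {u, z} \<in> edges G"
proof -
  obtain c where c: "c \<in> verts G" "\<forall>t\<in>verts G - {c}. {c, t} \<in> edges G"
    using assms(2) unfolding dom_one_def by blast
  obtain e where e: "e \<in> edges G" using assms(3) by (metis card.empty ex_in_conv not_one_le_zero)
  obtain p s where ps: "e = {p, s}" "p \<noteq> s" "p \<in> verts G" "s \<in> verts G" using graph_edge[OF assms(1) e] by blast
  show ?thesis
  proof (cases "u = c")
    case False thus ?thesis using c assms(4) by (metis DiffI insert_commute singletonD)
  next
    case True
    show ?thesis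
    proof (cases "p = c")
      case True thus ?thesis using `u = c` e ps by blast
    next
      case False thus ?thesis using `u = c` c ps by blast
    qed
  qed
qed

lemma dom_edge_another:
  assumes "graph G" "dom_one G" "card (edges G) \<ge> 2" "{y, z} \<in> edges G"
  shows "\<exists>e\<in>edges G. e \<noteq> {y, z} \<and> (y \<in> e \<or> z \<in> e)"
proof -
  obtain c where c: "c \<in> verts G" "\<forall>t\<in>verts G - {c}. {c, t} \<in> edges G"
    using assms(2) unfolding dom_one_def by blast
  have yz: "y \<noteq> z" "y \<in> verts G" "z \<in> verts G" using graph_edge_pair[OF assms(1,4)] by auto
  have fin: "finite (edges G)" using graph_finite_edges[OF assms(1)] .
  obtain e1 e2 where e12: "e1 \<in> edges G" "e2 \<in> edges G" "e1 \<noteq> e2" using card_ge2_two[OF fin assms(3)] by blast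
  obtain p where p: "p \<in> verts G" "p \<noteq> y" "p \<noteq> z"
    using graph_two_edges_three_verts[OF assms(1) e12 yz(2,3)] by blast
  have pe: "{c, p} \<in> edges G" if "c \<noteq> p" using c p that by simp
  show ?thesis
  proof (cases "c = y")
    case True
    have "{c, p} \<in> edges G" using pe p True by simp
    moreover have "{c, p} \<noteq> {y, z}" using p True by (auto simp: doubleton_eq_iff)
    moreover have "y \<in> {c, p}" using True by simp
    ultimately show ?thesis by (intro bexI[of _ "{c, p}"]) simp_all
  next
    case cy: False
    show ?thesis
    proof (cases "c = z")
      case True
      have "{c, p} \<in> edges G" using pe p True by simp
      moreover have "{c, p} \<noteq> {y, z}" using p True cy by (auto simp: doubleton_eq_iff)
      moreover have "z \<in> {c, p}" using True by simp
      ultimately show ?thesis by (intro bexI[of _ "{c, p}"]) simp_all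
    next
      case False
      have "{c, y} \<in> edges G" using c yz cy by simp
      moreover have "{c, y} \<noteq> {y, z}" using cy False by (auto simp: doubleton_eq_iff)
      ultimately show ?thesis by (intro bexI[of _ "{c, y}"]) simp_all
    qed
  qed
qed



lemma conn_edges:
  assumes g: "graph T" and c: "connected_graph T"
  shows "card (verts T) \<le> card (edges T) + 1"
proof -
  obtain r where r: "r \<in> verts T" using c unfolding connected_graph_def by auto
  define R where "R = adj_rel T"
  define d where "d u = (LEAST n. (r, u) \<in> R ^^ n)" for u
  have reach: "\<exists>n. (r, u) \<in> R ^^ n" if "u \<in> verts T" for u
  proof -
    have "(r, u) \<in> R\<^sup>*" using c r that unfolding connected_graph_def R_def by simp
    thus ?thesis by (rule rtrancl_imp_relpow)
  qed
  have dpath: "(r, u) \<in> R ^^ d u" if "u \<in> verts T" for u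
    unfolding d_def using reach[OF that] by (rule LeastI_ex)
  have dmin: "d u \<le> n" if "(r, u) \<in> R ^^ n" for u n
    unfolding d_def using that by (rule Least_le)
  have par: "\<exists>z. {z, u} \<in> edges T \<and> d z < d u" if u: "u \<in> verts T" "u \<noteq> r" for u
  proof -
    have "d u \<noteq> 0"
    proof
      assume "d u = 0"
      hence "(r, u) \<in> R ^^ 0" using dpath[OF u(1)] by simp
      thus False using u(2) by simp
    qed
    then obtain n where n: "d u = Suc n" using not0_implies_Suc by blast
    hence "(r, u) \<in> R ^^ n O R" using dpath[OF u(1)] by simp
    then obtain z where z: "(r, z) \<in> R ^^ n" "(z, u) \<in> R" by blast
    have "d z \<le> n" using dmin[OF z(1)] .
    moreover have "{z, u} \<in> edges T" using z(2) unfolding R_def adj_rel_def by simp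
    ultimately show ?thesis using n by (intro exI[of _ z]) simp
  qed
  define p where "p u = (SOME z. {z, u} \<in> edges T \<and> d z < d u)" for u
  have pp: "{p u, u} \<in> edges T \<and> d (p u) < d u" if "u \<in> verts T - {r}" for u
  proof -
    have "\<exists>z. {z, u} \<in> edges T \<and> d z < d u" using par that by blast
    from someI_ex[OF this] show ?thesis unfolding p_def .
  qed
  have inj: "inj_on (\<lambda>u. {p u, u}) (verts T - {r})"
  proof (rule inj_onI)
    fix u1 u2 assume u1: "u1 \<in> verts T - {r}" and u2: "u2 \<in> verts T - {r}" and eq: "{p u1, u1} = {p u2, u2}"
    show "u1 = u2"
    proof (rule ccontr)
      assume ne: "u1 \<noteq> u2"
      hence h: "p u1 = u2 \<and> u1 = p u2" using eq by (metis doubleton_eq_iff)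
      have h1: "p u1 = u2" using h by (rule conjunct1)
      have h2: "p u2 = u1" using h by (metis)
      have "d (p u1) < d u1" using pp[OF u1] by simp
      hence "d u2 < d u1" unfolding h1 .
      moreover have "d (p u2) < d u2" using pp[OF u2] by simp
      hence "d u1 < d u2" unfolding h2 .
      ultimately show False by simp
    qed
  qed
  have "(\<lambda>u. {p u, u}) ` (verts T - {r}) \<subseteq> edges T" using pp by auto
  hence "card (verts T - {r}) \<le> card (edges T)"
    using card_inj_on_le[OF inj] graph_finite_edges[OF g] by simp
  moreover have "finite (verts T)" using g unfolding graph_def by simp
  ultimately show ?thesis using r by (simp add: card_Diff_singleton)
qed

lemma mod_step_ne:
  fixes n i :: nat
  assumes "n \<ge> 3" "i < n" shows "((i + 1) mod n + 1) mod n \<noteq> i"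
proof (cases "i + 1 < n")
  case True
  hence a: "(i + 1) mod n = i + 1" by (rule mod_less)
  show ?thesis
  proof (cases "i + 2 < n")
    case True thus ?thesis using a by simp
  next
    case False
    hence "i + 2 = n" using `i + 1 < n` by simp
    thus ?thesis using a assms by simp
  qed
next
  case False
  hence "i + 1 = n" using assms by simp
  thus ?thesis using assms by simp
qed

lemma cyc_cross:
  fixes cs :: "'a list"
  assumes n: "length cs = n" "n > 0" and a: "a < n" "P (cs ! a)" and b: "b < n" "\<not> P (cs ! b)"
  shows "\<exists>i<n. P (cs ! i) \<and> \<not> P (cs ! ((i + 1) mod n))"
proof (rule ccontr)
  assume "\<not> ?thesis"
  hence step: "\<And>i. i < n \<Longrightarrow> P (cs ! i) \<Longrightarrow> P (cs ! ((i + 1) mod n))" by blast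
  have all: "P (cs ! ((a + t) mod n))" for t
  proof (induction t)
    case 0 thus ?case using a by simp
  next
    case (Suc t)
    have "(a + t) mod n < n" using n(2) by simp
    hence "P (cs ! (((a + t) mod n + 1) mod n))" using step Suc by blast
    moreover have "((a + t) mod n + 1) mod n = (a + Suc t) mod n" by (simp add: mod_Suc_eq)
    ultimately show ?case by simp
  qed
  have "(a + (b + n - a)) mod n = b" using a b by simp
  hence "P (cs ! b)" using all[of "b + n - a"] by simp
  thus False using b by simp
qed


lemma tree_join:
  assumes g1: "graph T1" "tree T1" and g2: "graph T2" "tree T2"
    and disj: "verts T1 \<inter> verts T2 = {}" and x: "x \<in> verts T1" and y: "y \<in> verts T2"
    and T: "T = (verts T1 \<union> verts T2, edges T1 \<union> edges T2 \<union> {{x, y}})"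
  shows "graph T \<and> tree T"
proof -
  have vT: "verts T = verts T1 \<union> verts T2" and eT: "edges T = edges T1 \<union> edges T2 \<union> {{x, y}}"
    using T by (simp_all add: verts_def edges_def)
  have xy: "x \<noteq> y" using disj x y by blast
  have graphT: "graph T"
    unfolding graph_def
  proof
    show "finite (verts T)" using g1(1) g2(1) vT unfolding graph_def by simp
    show "\<forall>e\<in>edges T. \<exists>u v. e = {u, v} \<and> u \<noteq> v \<and> u \<in> verts T \<and> v \<in> verts T"
    proof
      fix e assume "e \<in> edges T"
      hence "e \<in> edges T1 \<or> e \<in> edges T2 \<or> e = {x, y}" using eT by auto
      thus "\<exists>u v. e = {u, v} \<and> u \<noteq> v \<and> u \<in> verts T \<and> v \<in> verts T"
      proof (elim disjE)
        assume "e \<in> edges T1"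
        then obtain u v where "e = {u, v}" "u \<noteq> v" "u \<in> verts T1" "v \<in> verts T1" using graph_edge[OF g1(1)] by blast
        thus ?thesis using vT by blast
      next
        assume "e \<in> edges T2"
        then obtain u v where "e = {u, v}" "u \<noteq> v" "u \<in> verts T2" "v \<in> verts T2" using graph_edge[OF g2(1)] by blast
        thus ?thesis using vT by blast
      next
        assume "e = {x, y}" thus ?thesis using xy x y vT by blast
      qed
    qed
  qed
  have conn: "connected_graph T"
    unfolding connected_graph_def
  proof
    show "verts T \<noteq> {}" using x vT by auto
    have R1: "adj_rel T1 \<subseteq> adj_rel T" and R2: "adj_rel T2 \<subseteq> adj_rel T" using eT unfolding adj_rel_def by auto
    have Rxy: "(x, y) \<in> adj_rel T" "(y, x) \<in> adj_rel T" using eT unfolding adj_rel_def by (auto simp: insert_commute)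
    have c1: "(u, w) \<in> (adj_rel T)\<^sup>*" if "u \<in> verts T1" "w \<in> verts T1" for u w
    proof -
      have "(u, w) \<in> (adj_rel T1)\<^sup>*" using g1(2) that unfolding tree_def connected_graph_def by blast
      thus ?thesis using rtrancl_mono[OF R1] by blast
    qed
    have c2: "(u, w) \<in> (adj_rel T)\<^sup>*" if "u \<in> verts T2" "w \<in> verts T2" for u w
    proof -
      have "(u, w) \<in> (adj_rel T2)\<^sup>*" using g2(2) that unfolding tree_def connected_graph_def by blast
      thus ?thesis using rtrancl_mono[OF R2] by blast
    qed
    show "\<forall>u\<in>verts T. \<forall>v\<in>verts T. (u, v) \<in> (adj_rel T)\<^sup>*"
    proof (intro ballI)
      fix u w assume u: "u \<in> verts T" and w: "w \<in> verts T"
      show "(u, w) \<in> (adj_rel T)\<^sup>*"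
      proof (cases "u \<in> verts T1")
        case u1: True
        show ?thesis
        proof (cases "w \<in> verts T1")
          case True thus ?thesis using c1 u1 by blast
        next
          case False
          hence w2: "w \<in> verts T2" using w vT by blast
          have "(u, x) \<in> (adj_rel T)\<^sup>*" using c1 u1 x by blast
          moreover have "(y, w) \<in> (adj_rel T)\<^sup>*" using c2 y w2 by blast
          ultimately show ?thesis using Rxy(1) by (meson rtrancl_into_rtrancl rtrancl_trans)
        qed
      next
        case False
        hence u2: "u \<in> verts T2" using u vT by blast
        show ?thesis
        proof (cases "w \<in> verts T2")
          case True thus ?thesis using c2 u2 by blast
        next
          case False
          hence w1: "w \<in> verts T1" using w vT by blast
          have "(u, y) \<in> (adj_rel T)\<^sup>*" using c2 u2 y by blast
          moreover have "(x, w) \<in> (adj_rel T)\<^sup>*" using c1 x w1 by blast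
          ultimately show ?thesis using Rxy(2) by (meson rtrancl_into_rtrancl rtrancl_trans)
        qed
      qed
    qed
  qed
  have e1sub: "e \<subseteq> verts T1" if "e \<in> edges T1" for e using graph_edge_sub[OF g1(1) that] .
  have e2sub: "e \<subseteq> verts T2" if "e \<in> edges T2" for e using graph_edge_sub[OF g2(1) that] .
  have acyc: "acyclic_graph T"
    unfolding acyclic_graph_def
  proof
    assume "\<exists>cs. 3 \<le> length cs \<and> distinct cs \<and> set cs \<subseteq> verts T \<and>
        (\<forall>i<length cs. {cs ! i, cs ! ((i + 1) mod length cs)} \<in> edges T)"
    then obtain cs where cs: "3 \<le> length cs" "distinct cs" "set cs \<subseteq> verts T"
        "\<forall>i<length cs. {cs ! i, cs ! ((i + 1) mod length cs)} \<in> edges T" by blast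
    define n where "n = length cs"
    have n3: "n \<ge> 3" using cs(1) n_def by simp
    have ed: "{cs ! i, cs ! ((i + 1) mod n)} \<in> edges T" if "i < n" for i using cs(4) that n_def by simp
    have mem: "cs ! i \<in> verts T1 \<union> verts T2" if "i < n" for i using cs(3) vT that n_def nth_mem by blast
    have nx: "(i + 1) mod n < n" for i using n3 by simp
    show False
    proof (cases "\<forall>i<n. cs ! i \<in> verts T1")
      case True
      have "{cs ! i, cs ! ((i + 1) mod n)} \<in> edges T1" if "i < n" for i
      proof -
        have s: "{cs ! i, cs ! ((i + 1) mod n)} \<subseteq> verts T1" using True that nx by simp
        have "{cs ! i, cs ! ((i + 1) mod n)} \<notin> edges T2"
          using e2sub s disj by blast
        moreover have "{cs ! i, cs ! ((i + 1) mod n)} \<noteq> {x, y}" using s y disj by blast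
        ultimately show ?thesis using ed[OF that] eT by simp
      qed
      moreover have "set cs \<subseteq> verts T1" using True n_def by (metis in_set_conv_nth subsetI)
      ultimately show False using g1(2) cs(1,2) n_def unfolding tree_def acyclic_graph_def by blast
    next
      case notall1: False
      show False
      proof (cases "\<forall>i<n. cs ! i \<in> verts T2")
        case True
        have "{cs ! i, cs ! ((i + 1) mod n)} \<in> edges T2" if "i < n" for i
        proof -
          have s: "{cs ! i, cs ! ((i + 1) mod n)} \<subseteq> verts T2" using True that nx by simp
          have "{cs ! i, cs ! ((i + 1) mod n)} \<notin> edges T1"
            using e1sub s disj by blast
          moreover have "{cs ! i, cs ! ((i + 1) mod n)} \<noteq> {x, y}" using s x disj by blast
          ultimately show ?thesis using ed[OF that] eT by simp
        qed
        moreover have "set cs \<subseteq> verts T2" using True n_def by (metis in_set_conv_nth subsetI)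
        ultimately show False using g2(2) cs(1,2) n_def unfolding tree_def acyclic_graph_def by blast
      next
        case False
        obtain a where a: "a < n" "cs ! a \<notin> verts T2" using False by blast
        obtain b where b: "b < n" "cs ! b \<notin> verts T1" using notall1 by blast
        have a1: "cs ! a \<in> verts T1" using a mem by blast
        have n0: "n > 0" using n3 by simp
        obtain i where i: "i < n" "cs ! i \<in> verts T1" "cs ! ((i + 1) mod n) \<notin> verts T1"
          using cyc_cross[of cs n a "\<lambda>u. u \<in> verts T1" b] n_def n0 a(1) a1 b by auto
        obtain j where j: "j < n" "cs ! j \<notin> verts T1" "cs ! ((j + 1) mod n) \<in> verts T1"
          using cyc_cross[of cs n b "\<lambda>u. u \<notin> verts T1" a] n_def n0 a(1) a1 b by auto
        have cross: "cs ! k = x \<and> cs ! ((k + 1) mod n) = y"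
          if "k < n" "cs ! k \<in> verts T1" "cs ! ((k + 1) mod n) \<notin> verts T1" for k
        proof -
          let ?e = "{cs ! k, cs ! ((k + 1) mod n)}"
          have "?e \<notin> edges T1" using e1sub that(3) by blast
          moreover have "?e \<notin> edges T2" using e2sub that(2) disj by blast
          ultimately have "?e = {x, y}" using ed[OF that(1)] eT by simp
          thus ?thesis using that(2,3) x y disj by (auto simp: doubleton_eq_iff)
        qed
        have cross2: "cs ! k = y \<and> cs ! ((k + 1) mod n) = x"
          if "k < n" "cs ! k \<notin> verts T1" "cs ! ((k + 1) mod n) \<in> verts T1" for k
        proof -
          let ?e = "{cs ! k, cs ! ((k + 1) mod n)}"
          have "?e \<notin> edges T1" using e1sub that(2) by blast
          moreover have "?e \<notin> edges T2" using e2sub that(3) disj by blast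
          ultimately have "?e = {x, y}" using ed[OF that(1)] eT by simp
          thus ?thesis using that(2,3) x y disj by (auto simp: doubleton_eq_iff)
        qed
        have ci: "cs ! i = x" "cs ! ((i + 1) mod n) = y" using cross[OF i] by simp_all
        have cj: "cs ! j = y" "cs ! ((j + 1) mod n) = x" using cross2[OF j] by simp_all
        have "i = (j + 1) mod n" using ci(1) cj(2) cs(2) i(1) nx n_def by (metis nth_eq_iff_index_eq)
        moreover have "(i + 1) mod n = j" using ci(2) cj(1) cs(2) j(1) nx n_def by (metis nth_eq_iff_index_eq)
        ultimately have "((i + 1) mod n + 1) mod n = i" by simp
        thus False using mod_step_ne[OF n3 i(1)] by simp
      qed
    qed
  qed
  show ?thesis using graphT conn acyc unfolding tree_def by simp
qed


lemma single_tree: "graph ({x}, {}) \<and> tree ({x}, {})"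
proof -
  have g: "graph ({x}, {})" unfolding graph_def verts_def edges_def by simp
  have c: "connected_graph ({x}, {})" unfolding connected_graph_def verts_def by simp
  have a: "acyclic_graph ({x}, {})" unfolding acyclic_graph_def verts_def edges_def
  proof
    assume "\<exists>cs. 3 \<le> length cs \<and> distinct cs \<and> set cs \<subseteq> fst ({x}, {}) \<and>
        (\<forall>i<length cs. {cs ! i, cs ! ((i + 1) mod length cs)} \<in> snd ({x}, {}))"
    then obtain cs where "3 \<le> length cs" "distinct cs" "set cs \<subseteq> {x}" by auto
    moreover have "distinct cs \<Longrightarrow> set cs \<subseteq> {x} \<Longrightarrow> length cs \<le> 1"
      by (metis card_mono distinct_card finite.emptyI finite_insert is_singletonI is_singleton_altdef)
    ultimately show False by simp
  qed
  show ?thesis using g c a unfolding tree_def by simp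
qed



definition U :: "(nat \<Rightarrow> 'a) \<Rightarrow> (nat \<Rightarrow> 'a graph) \<Rightarrow> nat \<Rightarrow> 'a set" where
  "U v Fs l = insert (v l) (verts (Fs l))"

definition UE :: "(nat \<Rightarrow> 'a) \<Rightarrow> (nat \<Rightarrow> 'a graph) \<Rightarrow> (nat \<Rightarrow> 'a) \<Rightarrow> nat \<Rightarrow> 'a set set" where
  "UE v Fs w l = insert {v l, w l} (edges (Fs l))"

definition udel :: "(nat \<Rightarrow> 'a) \<Rightarrow> (nat \<Rightarrow> 'a graph) \<Rightarrow> (nat \<Rightarrow> 'a) \<Rightarrow> nat \<Rightarrow> 'a set \<Rightarrow> 'a graph" where
  "udel v Fs w l N = (U v Fs l - N, {e \<in> UE v Fs w l. e \<inter> N = {}})"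

definition pdec :: "'b graph \<Rightarrow> 'a graph \<Rightarrow> nat \<Rightarrow> (nat \<Rightarrow> 'a) \<Rightarrow> (nat \<Rightarrow> 'a graph) \<Rightarrow> (nat \<Rightarrow> 'a) \<Rightarrow> 'a graph \<Rightarrow> bool" where
  "pdec F G q v Fs w T \<longleftrightarrow> q \<ge> 1 \<and> inj_on v {..<q} \<and>
     (\<forall>i<q. graph (Fs i) \<and> iso (Fs i) F \<and> w i \<in> verts (Fs i)) \<and>
     (\<forall>i<q. \<forall>j<q. i \<noteq> j \<longrightarrow> verts (Fs i) \<inter> verts (Fs j) = {}) \<and>
     (\<forall>i<q. \<forall>j<q. v j \<notin> verts (Fs i)) \<and>
     graph T \<and> tree T \<and> verts T = v ` {..<q} \<and>
     G = ((\<Union>i<q. U v Fs i), edges T \<union> (\<Union>i<q. UE v Fs w i))"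

context
  fixes F :: "'b graph" and G :: "'a graph" and q v Fs w T
  assumes P: "pdec F G q v Fs w T"
begin

lemma pq: "q \<ge> 1" using P unfolding pdec_def by simp
lemma pinj: "inj_on v {..<q}" using P unfolding pdec_def by simp
lemma pFs: "i < q \<Longrightarrow> graph (Fs i) \<and> iso (Fs i) F \<and> w i \<in> verts (Fs i)" using P unfolding pdec_def by simp
lemma pdisj: "i < q \<Longrightarrow> j < q \<Longrightarrow> i \<noteq> j \<Longrightarrow> verts (Fs i) \<inter> verts (Fs j) = {}" using P unfolding pdec_def by simp
lemma pvnot: "i < q \<Longrightarrow> j < q \<Longrightarrow> v j \<notin> verts (Fs i)" using P unfolding pdec_def by simp
lemma pT: "graph T" "tree T" "verts T = v ` {..<q}" using P unfolding pdec_def by simp_all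
lemma pV: "verts G = (\<Union>i<q. U v Fs i)" using P unfolding pdec_def verts_def by simp
lemma pE: "edges G = edges T \<union> (\<Union>i<q. UE v Fs w i)" using P unfolding pdec_def edges_def by simp

lemma pU_disj: "i < q \<Longrightarrow> j < q \<Longrightarrow> i \<noteq> j \<Longrightarrow> U v Fs i \<inter> U v Fs j = {}"
proof -
  assume ij: "i < q" "j < q" "i \<noteq> j"
  have "v i \<noteq> v j" using pinj ij by (meson inj_on_contraD lessThan_iff)
  thus ?thesis unfolding U_def using pdisj[OF ij] pvnot ij by auto
qed

lemma pUE_sub: "i < q \<Longrightarrow> e \<in> UE v Fs w i \<Longrightarrow> e \<subseteq> U v Fs i"
  unfolding UE_def U_def using graph_edge_sub pFs by fastforce

lemma pUE_pair: "i < q \<Longrightarrow> e \<in> UE v Fs w i \<Longrightarrow> \<exists>a b. e = {a, b} \<and> a \<noteq> b"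
proof -
  assume i: "i < q" and e: "e \<in> UE v Fs w i"
  show ?thesis
  proof (cases "e = {v i, w i}")
    case True
    have "v i \<noteq> w i" using pvnot[OF i i] pFs[OF i] by auto
    thus ?thesis using True by blast
  next
    case False
    hence "e \<in> edges (Fs i)" using e unfolding UE_def by simp
    thus ?thesis using graph_edge pFs[OF i] by metis
  qed
qed

lemma pT_edge: "e \<in> edges T \<Longrightarrow> \<exists>a b. e = {a, b} \<and> a \<noteq> b \<and> a \<in> v ` {..<q} \<and> b \<in> v ` {..<q}"
  using graph_edge[OF pT(1)] pT(3) by metis

lemma pv_in_U: "i < q \<Longrightarrow> v i \<in> U v Fs i" unfolding U_def by simp
lemma pw_in_U: "i < q \<Longrightarrow> w i \<in> U v Fs i" unfolding U_def using pFs by simp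

lemma pU_sub: "i < q \<Longrightarrow> U v Fs i \<subseteq> verts G" using pV by auto

lemma pgraph: "graph G"
  unfolding graph_def
proof
  have "finite (U v Fs i)" if "i < q" for i
    unfolding U_def using pFs[OF that] unfolding graph_def by simp
  thus "finite (verts G)" using pV by simp
  show "\<forall>e\<in>edges G. \<exists>u v. e = {u, v} \<and> u \<noteq> v \<and> u \<in> verts G \<and> v \<in> verts G"
  proof
    fix e assume "e \<in> edges G"
    hence "e \<in> edges T \<or> (\<exists>i<q. e \<in> UE v Fs w i)" using pE by auto
    thus "\<exists>a b. e = {a, b} \<and> a \<noteq> b \<and> a \<in> verts G \<and> b \<in> verts G"
    proof
      assume "e \<in> edges T"
      then obtain a b where ab: "e = {a, b}" "a \<noteq> b" "a \<in> v ` {..<q}" "b \<in> v ` {..<q}" using pT_edge by blast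
      have "v ` {..<q} \<subseteq> verts G" using pV pv_in_U by auto
      thus ?thesis using ab by blast
    next
      assume "\<exists>i<q. e \<in> UE v Fs w i"
      then obtain i where i: "i < q" "e \<in> UE v Fs w i" by blast
      obtain a b where ab: "e = {a, b}" "a \<noteq> b" using pUE_pair[OF i] by blast
      have "e \<subseteq> verts G" using pUE_sub[OF i] pU_sub[OF i(1)] by blast
      thus ?thesis using ab by blast
    qed
  qed
qed

lemma pE_sub: "e \<in> edges G \<Longrightarrow> e \<subseteq> verts G" using graph_edge_sub[OF pgraph] .

lemma pFs_edges: "i < q \<Longrightarrow> graph F \<Longrightarrow> card (edges (Fs i)) = card (edges F)"
  using iso_card_edges pFs by blast

lemma pUE_card: "i < q \<Longrightarrow> graph F \<Longrightarrow> card (UE v Fs w i) = card (edges F) + 1"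
proof -
  assume i: "i < q" and gF: "graph F"
  have "{v i, w i} \<notin> edges (Fs i)" using graph_edge_sub pFs[OF i] pvnot[OF i i] by blast
  moreover have "finite (edges (Fs i))" using graph_finite_edges pFs[OF i] by blast
  ultimately show ?thesis unfolding UE_def using pFs_edges[OF i gF] by simp
qed

lemma pcard_lower:
  assumes gF: "graph F"
  shows "q * (card (edges F) + 2) \<le> card (edges G) + 1"
proof -
  let ?k = "card (edges F)"
  have fin: "finite (edges G)" using graph_finite_edges[OF pgraph] .
  have finT: "finite (edges T)" using graph_finite_edges[OF pT(1)] .
  have finU: "finite (\<Union>i<q. UE v Fs w i)" using fin pE by simp
  have disjTU: "edges T \<inter> (\<Union>i<q. UE v Fs w i) = {}"
  proof (rule ccontr)
    assume "edges T \<inter> (\<Union>i<q. UE v Fs w i) \<noteq> {}"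
    then obtain e i where e: "e \<in> edges T" "i < q" "e \<in> UE v Fs w i" by blast
    obtain a b where ab: "e = {a, b}" "a \<noteq> b" "a \<in> v ` {..<q}" "b \<in> v ` {..<q}" using pT_edge e(1) by blast
    show False
    proof (cases "e = {v i, w i}")
      case True
      have "w i \<in> e" using True by simp
      hence "w i \<in> v ` {..<q}" using ab by blast
      thus False using pvnot e(2) pFs[OF e(2)] by auto
    next
      case False
      hence "e \<in> edges (Fs i)" using e(3) unfolding UE_def by simp
      hence "a \<in> verts (Fs i)" using graph_edge_sub pFs[OF e(2)] ab(1) by blast
      thus False using ab(3) pvnot e(2) by auto
    qed
  qed
  have cardU: "card (\<Union>i<q. UE v Fs w i) = q * (?k + 1)"
  proof -
    have "card (\<Union>i<q. UE v Fs w i) = (\<Sum>i<q. card (UE v Fs w i))"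
    proof (rule card_UN_disjoint)
      show "finite {..<q}" by simp
      show "\<forall>i\<in>{..<q}. finite (UE v Fs w i)"
      proof
        fix i assume i: "i \<in> {..<q}"
        have "graph (Fs i)" using pFs i by simp
        thus "finite (UE v Fs w i)" unfolding UE_def using graph_finite_edges[of "Fs i"] by simp
      qed
      show "\<forall>i\<in>{..<q}. \<forall>j\<in>{..<q}. i \<noteq> j \<longrightarrow> UE v Fs w i \<inter> UE v Fs w j = {}"
      proof (intro ballI impI)
        fix i j assume i: "i \<in> {..<q}" and j: "j \<in> {..<q}" and ij: "i \<noteq> j"
        show "UE v Fs w i \<inter> UE v Fs w j = {}"
        proof (rule ccontr)
          assume "UE v Fs w i \<inter> UE v Fs w j \<noteq> {}"
          then obtain e where e: "e \<in> UE v Fs w i" "e \<in> UE v Fs w j" by blast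
          have "e \<subseteq> U v Fs i" "e \<subseteq> U v Fs j" using pUE_sub e i j by auto
          moreover obtain a b where "e = {a, b}" using pUE_pair e i by blast
          ultimately show False using pU_disj i j ij by auto
        qed
      qed
    qed
    also have "\<dots> = (\<Sum>i<q. ?k + 1)" using pUE_card gF by simp
    finally show ?thesis by simp
  qed
  have "card (verts T) = q" using pT(3) pinj by (simp add: card_image)
  hence "q \<le> card (edges T) + 1" using conn_edges[OF pT(1)] pT(2) unfolding tree_def by simp
  moreover have "card (edges G) = card (edges T) + q * (?k + 1)"
    using pE card_Un_disjoint[OF finT finU disjTU] cardU by simp
  ultimately show ?thesis by (simp add: algebra_simps)
qed

end

lemma pure_to_pdec:
  assumes "special_constr m F G q 0"
  shows "\<exists>v Fs w T. pdec F G q v Fs w T \<and> m + 1 = q * (card (edges F) + 2)"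
proof -
  obtain v Fs w T T' where
    a: "inj_on v {..<q}"
       "\<forall>i<q. graph (Fs i) \<and> iso (Fs i) F \<and> w i \<in> verts (Fs i)"
       "\<forall>i<q. \<forall>j<q. i \<noteq> j \<longrightarrow> verts (Fs i) \<inter> verts (Fs j) = {}"
       "\<forall>i<q. \<forall>j<q. v j \<notin> verts (Fs i)"
       "graph T" "tree T" "verts T = v ` {..<q}"
       "graph T'" "connected_graph T'" "card (edges T') = 0"
       "verts T' \<inter> (\<Union>i<q. insert (v i) (verts (Fs i))) = {v (q - 1)}"
       "G = (verts T' \<union> (\<Union>i<q. insert (v i) (verts (Fs i))),
             edges T \<union> edges T' \<union> (\<Union>i<q. insert {v i, w i} (edges (Fs i))))"
    and q: "q \<ge> 1" "m + 1 = q * (card (edges F) + 2)"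
    using assms unfolding special_constr_def by auto
  have eT': "edges T' = {}" using a(10) graph_finite_edges[OF a(8)] by simp
  have "v (q - 1) \<in> verts T'" using a(11) by blast
  moreover have "verts T' \<subseteq> {v (q - 1)}"
  proof
    fix u assume u: "u \<in> verts T'"
    have "(v (q - 1), u) \<in> (adj_rel T')\<^sup>*" using a(9) u `v (q - 1) \<in> verts T'` unfolding connected_graph_def by blast
    moreover have "adj_rel T' = {}" unfolding adj_rel_def using eT' by simp
    ultimately show "u \<in> {v (q - 1)}" by simp
  qed
  ultimately have vT': "verts T' = {v (q - 1)}" by blast
  have "v (q - 1) \<in> (\<Union>i<q. insert (v i) (verts (Fs i)))" using q(1) by auto
  hence "G = ((\<Union>i<q. U v Fs i), edges T \<union> (\<Union>i<q. UE v Fs w i))"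
    using a(12) vT' eT' unfolding U_def UE_def by auto
  hence "pdec F G q v Fs w T" unfolding pdec_def using a q by blast
  thus ?thesis using q by blast
qed

lemma pdec_to_special:
  assumes "pdec F G q v Fs w T" "m + 1 = q * (card (edges F) + 2)"
  shows "special m F G"
proof -
  note P = assms(1)
  let ?T' = "({v (q - 1)}, {})"
  have q: "q \<ge> 1" using pq[OF P] .
  have gT': "graph ?T'" "connected_graph ?T'" using single_tree[of "v (q - 1)"] unfolding tree_def by simp_all
  have "v (q - 1) \<in> (\<Union>i<q. insert (v i) (verts (Fs i)))" using q by auto
  hence int: "verts ?T' \<inter> (\<Union>i<q. insert (v i) (verts (Fs i))) = {v (q - 1)}" unfolding verts_def by auto
  have G: "G = (verts ?T' \<union> (\<Union>i<q. insert (v i) (verts (Fs i))),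
             edges T \<union> edges ?T' \<union> (\<Union>i<q. insert {v i, w i} (edges (Fs i))))"
    using P `v (q - 1) \<in> (\<Union>i<q. insert (v i) (verts (Fs i)))` unfolding pdec_def U_def UE_def verts_def edges_def
    by auto
  have "special_constr m F G q 0"
    unfolding special_constr_def
    using q assms(2) P gT' int G unfolding pdec_def
    by (intro conjI exI[of _ v] exI[of _ Fs] exI[of _ w] exI[of _ T] exI[of _ ?T']) (simp_all add: edges_def)
  thus ?thesis unfolding special_def by blast
qed



definition sidecond :: "'b graph \<Rightarrow> nat \<Rightarrow> (nat \<Rightarrow> 'a) \<Rightarrow> (nat \<Rightarrow> 'a graph) \<Rightarrow> (nat \<Rightarrow> 'a) \<Rightarrow> 'a graph \<Rightarrow> 'a set \<Rightarrow> bool" where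
  "sidecond F q v Fs w T N \<longleftrightarrow> (\<forall>e\<in>edges T. e \<inter> N \<noteq> {}) \<and> (\<forall>l<q. \<not> contains_copy (udel v Fs w l N) F)"

definition bad :: "'b graph \<Rightarrow> nat \<Rightarrow> (nat \<Rightarrow> 'a) \<Rightarrow> (nat \<Rightarrow> 'a graph) \<Rightarrow> (nat \<Rightarrow> 'a) \<Rightarrow> 'a \<Rightarrow> bool" where
  "bad F q v Fs w x \<longleftrightarrow> q = 1 \<and> contains_copy (udel v Fs w 0 {x}) F"

lemma udel_mono:
  assumes "N \<subseteq> N'" "\<not> contains_copy (udel v Fs w l N) F"
  shows "\<not> contains_copy (udel v Fs w l N') F"
proof
  assume "contains_copy (udel v Fs w l N') F"
  moreover have "verts (udel v Fs w l N') \<subseteq> verts (udel v Fs w l N)"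
    using assms(1) unfolding udel_def verts_def by auto
  moreover have "edges (udel v Fs w l N') \<subseteq> edges (udel v Fs w l N)"
    using assms(1) unfolding udel_def edges_def by auto
  ultimately have "contains_copy (udel v Fs w l N) F" by (rule contains_mono)
  thus False using assms(2) by simp
qed

context
  fixes F :: "'b graph" and G :: "'a graph" and q v Fs w T
  assumes P: "pdec F G q v Fs w T"
    and gF: "graph F" and dF: "dom_one F" and kF: "card (edges F) \<ge> 3"
begin

lemma pFs_dom: "l < q \<Longrightarrow> dom_one (Fs l)"
  using dom_one_iso[OF _ dF] pFs[OF P] by blast

lemma pFs_card: "l < q \<Longrightarrow> card (edges (Fs l)) \<ge> 3"
  using pFs_edges[OF P _ gF] kF by simp

lemma unit_two:
  assumes l: "l < q" and e: "e1 \<in> UE v Fs w l" "e2 \<in> UE v Fs w l" "e1 \<noteq> e2"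
    and m: "e1 \<inter> N \<noteq> {}" "e2 \<inter> N \<noteq> {}"
  shows "\<not> contains_copy (udel v Fs w l N) F"
proof (rule few_edges_nocopy[OF gF])
  have finUE: "finite (UE v Fs w l)"
    unfolding UE_def using graph_finite_edges[of "Fs l"] pFs[OF P l] by simp
  have sub: "edges (udel v Fs w l N) \<subseteq> UE v Fs w l - {e1, e2}"
    using m unfolding udel_def edges_def by auto
  show "finite (edges (udel v Fs w l N))" using finite_subset[OF sub] finUE by simp
  have "card (UE v Fs w l - {e1, e2}) = card (UE v Fs w l) - 2"
    using e finUE by (simp add: card_Diff_subset)
  also have "\<dots> = card (edges F) - 1" using pUE_card[OF P l gF] by simp
  finally have "card (edges (udel v Fs w l N)) \<le> card (edges F) - 1"
    using card_mono[OF _ sub] finUE by (metis finite_Diff)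
  thus "card (edges (udel v Fs w l N)) < card (edges F)" using kF by simp
qed

lemma edge_in_UE: "l < q \<Longrightarrow> e \<in> edges (Fs l) \<Longrightarrow> e \<in> UE v Fs w l"
  unfolding UE_def by simp

lemma vw_in_UE: "{v l, w l} \<in> UE v Fs w l"
  unfolding UE_def by simp

lemma vw_not_Fs: "l < q \<Longrightarrow> e \<in> edges (Fs l) \<Longrightarrow> e \<noteq> {v l, w l}"
  using graph_edge_sub pFs[OF P] pvnot[OF P] by blast

lemma unit_w:
  assumes l: "l < q" and wN: "w l \<in> N"
  shows "\<not> contains_copy (udel v Fs w l N) F"
proof -
  obtain z where z: "{w l, z} \<in> edges (Fs l)"
    using dom_vertex_has_edge[of "Fs l" "w l"] pFs[OF P l] pFs_dom[OF l] pFs_card[OF l] by auto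
  show ?thesis
    using unit_two[OF l vw_in_UE edge_in_UE[OF l z]] vw_not_Fs[OF l z] wN by auto
qed

lemma unit_x:
  assumes l: "l < q" and x: "x \<in> verts (Fs l)" "x \<in> N" and vN: "v l \<in> N"
  shows "\<not> contains_copy (udel v Fs w l N) F"
proof -
  obtain z where z: "{x, z} \<in> edges (Fs l)"
    using dom_vertex_has_edge[of "Fs l" x] pFs[OF P l] pFs_dom[OF l] pFs_card[OF l] x(1) by auto
  show ?thesis
    using unit_two[OF l vw_in_UE edge_in_UE[OF l z]] vw_not_Fs[OF l z] vN x(2) by auto
qed

lemma unit_y:
  assumes l: "l < q" and y: "y \<in> verts (Fs l)" "y \<in> N" and nb: "\<And>z. {y, z} \<in> edges (Fs l) \<Longrightarrow> z \<in> N"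
  shows "\<not> contains_copy (udel v Fs w l N) F"
proof -
  obtain z where z: "{y, z} \<in> edges (Fs l)"
    using dom_vertex_has_edge[of "Fs l" y] pFs[OF P l] pFs_dom[OF l] pFs_card[OF l] y(1) by auto
  obtain e where e: "e \<in> edges (Fs l)" "e \<noteq> {y, z}" "y \<in> e \<or> z \<in> e"
    using dom_edge_another[of "Fs l" y z] pFs[OF P l] pFs_dom[OF l] pFs_card[OF l] z by auto
  have "z \<in> N" using nb[OF z] .
  hence "e \<inter> N \<noteq> {}" using e(3) y(2) by blast
  moreover have "{y, z} \<inter> N \<noteq> {}" using y(2) by blast
  ultimately show ?thesis
    using unit_two[OF l edge_in_UE[OF l z] edge_in_UE[OF l e(1)]] e(2) by auto
qed

lemma side_allq:
  assumes "\<And>l. l < q \<Longrightarrow> v l \<in> N \<and> w l \<in> N"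
  shows "sidecond F q v Fs w T N"
  unfolding sidecond_def
proof
  show "\<forall>e\<in>edges T. e \<inter> N \<noteq> {}"
  proof
    fix e assume "e \<in> edges T"
    then obtain a b where ab: "e = {a, b}" "a \<in> v ` {..<q}" using pT_edge[OF P] by blast
    thus "e \<inter> N \<noteq> {}" using assms by auto
  qed
  show "\<forall>l<q. \<not> contains_copy (udel v Fs w l N) F" using unit_w assms by blast
qed

lemma side_drop:
  assumes i: "i < q" and others: "\<And>l. l < q \<Longrightarrow> l \<noteq> i \<Longrightarrow> v l \<in> N \<and> w l \<in> N"
    and ui: "\<not> contains_copy (udel v Fs w i N) F"
  shows "sidecond F q v Fs w T N"
  unfolding sidecond_def
proof
  show "\<forall>e\<in>edges T. e \<inter> N \<noteq> {}"
  proof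
    fix e assume "e \<in> edges T"
    then obtain a b where ab: "e = {a, b}" "a \<noteq> b" "a \<in> v ` {..<q}" "b \<in> v ` {..<q}" using pT_edge[OF P] by blast
    show "e \<inter> N \<noteq> {}"
    proof (cases "a = v i")
      case True
      then obtain l where "l < q" "b = v l" "l \<noteq> i" using ab by auto
      thus ?thesis using others ab(1) by auto
    next
      case False
      then obtain l where "l < q" "a = v l" "l \<noteq> i" using ab by auto
      thus ?thesis using others ab(1) by auto
    qed
  qed
  show "\<forall>l<q. \<not> contains_copy (udel v Fs w l N) F"
    using unit_w others ui by blast
qed

lemma ptree_nb:
  assumes q2: "q \<ge> 2" and i: "i < q"
  shows "\<exists>l<q. l \<noteq> i \<and> {v i, v l} \<in> edges T"
proof -
  obtain j where j: "j < q" "j \<noteq> i" using q2 i by (metis One_nat_def Suc_1 Suc_le_lessD less_2_cases_iff nat_neq_iff not_less_eq zero_less_Suc)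
  have vi: "v i \<in> verts T" "v j \<in> verts T" using pT(3)[OF P] i j by auto
  have "v i \<noteq> v j" using pinj[OF P] i j by (metis inj_on_eq_iff lessThan_iff)
  moreover have "(v i, v j) \<in> (adj_rel T)\<^sup>*" using pT(2)[OF P] vi unfolding tree_def connected_graph_def by blast
  ultimately obtain t where t: "(v i, t) \<in> adj_rel T" by (metis converse_rtranclE)
  hence te: "{v i, t} \<in> edges T" unfolding adj_rel_def by simp
  have "t \<in> verts T" "t \<noteq> v i" using graph_edge_pair[OF pT(1)[OF P] te] by auto
  then obtain l where "l < q" "t = v l" "l \<noteq> i" using pT(3)[OF P] by auto
  thus ?thesis using te by blast
qed

end



lemma cn_D: "D \<subseteq> closed_nbhd G D" unfolding closed_nbhd_def by blast

lemma cn_nb: "u \<in> D \<Longrightarrow> {u, t} \<in> edges G \<Longrightarrow> t \<in> verts G \<Longrightarrow> t \<in> closed_nbhd G D"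
  unfolding closed_nbhd_def by blast

lemma del_verts_simps: "verts (del_verts G X) = verts G - X" "edges (del_verts G X) = {e \<in> edges G. e \<subseteq> verts G - X}"
  unfolding del_verts_def verts_def edges_def by simp_all

lemma pedge_ne:
  assumes P: "pdec F G q v Fs w T" and e: "e \<in> edges G" shows "e \<noteq> {}"
proof -
  obtain a b where "e = {a, b}" using graph_edge[OF pgraph[OF P] e] by blast
  thus ?thesis by simp
qed

lemma side_S:
  assumes P: "pdec F G1 q v Fs w T"
    and disj: "verts G1 \<inter> V2 = {}"
    and E2: "\<forall>e\<in>E2. e \<subseteq> V2 \<and> e \<noteq> {}"
    and x: "x \<in> verts G1" and y: "y \<notin> verts G1"
    and \<Gamma>: "\<Gamma> = (verts G1 \<union> V2, edges G1 \<union> E2 \<union> {{x, y}})"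
    and sc: "sidecond F q v Fs w T N" and xy: "x \<in> N \<or> y \<in> N"
    and c: "c \<in> verts (del_verts \<Gamma> N)" and c1: "c \<in> verts G1"
  shows "\<exists>S. c \<in> S \<and> (\<forall>u. {c, u} \<in> edges (del_verts \<Gamma> N) \<longrightarrow> u \<in> S) \<and>
     \<not> contains_copy (verts (del_verts \<Gamma> N) \<inter> S, {e \<in> edges (del_verts \<Gamma> N). e \<subseteq> S}) F"
proof -
  let ?H = "del_verts \<Gamma> N"
  have vG: "verts \<Gamma> = verts G1 \<union> V2" and eG: "edges \<Gamma> = edges G1 \<union> E2 \<union> {{x, y}}"
    using \<Gamma> by (simp_all add: verts_def edges_def)
  have eH: "edges ?H = {e \<in> edges \<Gamma>. e \<subseteq> verts \<Gamma> - N}" and vH: "verts ?H = verts \<Gamma> - N"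
    by (rule del_verts_simps)+
  obtain l where l: "l < q" "c \<in> U v Fs l" using c1 pV[OF P] by auto
  have key: "e \<in> UE v Fs w l \<and> e \<inter> N = {}" if e: "e \<in> edges ?H" "a \<in> e" "a \<in> U v Fs l" for e a
  proof -
    have eG': "e \<in> edges \<Gamma>" and eN: "e \<inter> N = {}" using e(1) eH by auto
    have a1: "a \<in> verts G1" using e(3) pU_sub[OF P l(1)] by blast
    have "e \<in> edges G1"
    proof -
      have "e \<noteq> {x, y}" using xy eN by auto
      moreover have "e \<notin> E2" using E2 a1 e(2) disj by blast
      ultimately show ?thesis using eG' eG by simp
    qed
    hence "e \<in> edges T \<or> (\<exists>l'<q. e \<in> UE v Fs w l')" using pE[OF P] by auto
    moreover have "e \<notin> edges T" using sc eN unfolding sidecond_def by blast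
    ultimately obtain l' where l': "l' < q" "e \<in> UE v Fs w l'" by blast
    have "a \<in> U v Fs l'" using pUE_sub[OF P l'] e(2) by blast
    hence "l' = l" using pU_disj[OF P l'(1) l(1)] e(3) by blast
    thus ?thesis using l' eN by simp
  qed
  have ne: "e \<noteq> {}" if "e \<in> edges \<Gamma>" for e
  proof -
    have "e \<in> edges G1 \<or> e \<in> E2 \<or> e = {x, y}" using that eG by auto
    thus ?thesis using E2 pedge_ne[OF P] by auto
  qed
  show ?thesis
  proof (intro exI[of _ "U v Fs l"] conjI allI impI)
    show "c \<in> U v Fs l" by (rule l(2))
    fix u assume "{c, u} \<in> edges ?H"
    hence "{c, u} \<in> UE v Fs w l" using key l(2) by blast
    thus "u \<in> U v Fs l" using pUE_sub[OF P l(1)] by blast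
  next
    show "\<not> contains_copy (verts ?H \<inter> U v Fs l, {e \<in> edges ?H. e \<subseteq> U v Fs l}) F"
    proof
      assume cc: "contains_copy (verts ?H \<inter> U v Fs l, {e \<in> edges ?H. e \<subseteq> U v Fs l}) F"
      have "verts (verts ?H \<inter> U v Fs l, {e \<in> edges ?H. e \<subseteq> U v Fs l}) \<subseteq> verts (udel v Fs w l N)"
        using vH unfolding udel_def verts_def by auto
      moreover have "edges (verts ?H \<inter> U v Fs l, {e \<in> edges ?H. e \<subseteq> U v Fs l}) \<subseteq> edges (udel v Fs w l N)"
      proof
        fix e assume "e \<in> edges (verts ?H \<inter> U v Fs l, {e \<in> edges ?H. e \<subseteq> U v Fs l})"
        hence e: "e \<in> edges ?H" "e \<subseteq> U v Fs l" unfolding edges_def by auto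
        have "e \<noteq> {}" using ne e(1) eH by auto
        then obtain a where "a \<in> e" by blast
        hence "e \<in> UE v Fs w l \<and> e \<inter> N = {}" using key e by blast
        thus "e \<in> edges (udel v Fs w l N)" unfolding udel_def edges_def by simp
      qed
      ultimately have "contains_copy (udel v Fs w l N) F" by (rule contains_mono[OF cc])
      thus False using sc l(1) unfolding sidecond_def by blast
    qed
  qed
qed

lemma isolating_sides:
  assumes P1: "pdec F G1 q1 v1 Fs1 w1 T1" and P2: "pdec F G2 q2 v2 Fs2 w2 T2"
    and disj: "verts G1 \<inter> verts G2 = {}" and x: "x \<in> verts G1" and y: "y \<in> verts G2"
    and \<Gamma>: "\<Gamma> = (verts G1 \<union> verts G2, edges G1 \<union> edges G2 \<union> {{x, y}})"
    and gF: "graph F" and dF: "dom_one F"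
    and D: "D \<subseteq> verts \<Gamma>"
    and sc1: "sidecond F q1 v1 Fs1 w1 T1 (closed_nbhd \<Gamma> D)"
    and sc2: "sidecond F q2 v2 Fs2 w2 T2 (closed_nbhd \<Gamma> D)"
    and xy: "x \<in> closed_nbhd \<Gamma> D \<or> y \<in> closed_nbhd \<Gamma> D"
  shows "isolating \<Gamma> F D"
  unfolding isolating_def
proof (intro conjI D nocopy_local[OF gF dF])
  fix c assume c: "c \<in> verts (del_verts \<Gamma> (closed_nbhd \<Gamma> D))"
  have vG: "verts \<Gamma> = verts G1 \<union> verts G2" using \<Gamma> by (simp add: verts_def)
  have "c \<in> verts \<Gamma>" using c by (simp add: del_verts_simps)
  hence "c \<in> verts G1 \<or> c \<in> verts G2" using vG by simp
  thus "\<exists>S. c \<in> S \<and> (\<forall>u. {c, u} \<in> edges (del_verts \<Gamma> (closed_nbhd \<Gamma> D)) \<longrightarrow> u \<in> S) \<and>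
     \<not> contains_copy (verts (del_verts \<Gamma> (closed_nbhd \<Gamma> D)) \<inter> S,
        {e \<in> edges (del_verts \<Gamma> (closed_nbhd \<Gamma> D)). e \<subseteq> S}) F"
  proof
    assume c1: "c \<in> verts G1"
    have E2: "\<forall>e\<in>edges G2. e \<subseteq> verts G2 \<and> e \<noteq> {}"
      using pE_sub[OF P2] pedge_ne[OF P2] by simp
    have yn: "y \<notin> verts G1" using disj y by blast
    show ?thesis using side_S[OF P1 disj E2 x yn \<Gamma> sc1 xy c c1] .
  next
    assume c2: "c \<in> verts G2"
    have E1: "\<forall>e\<in>edges G1. e \<subseteq> verts G1 \<and> e \<noteq> {}"
      using pE_sub[OF P1] pedge_ne[OF P1] by simp
    have xn: "x \<notin> verts G2" using disj x by blast
    have disj': "verts G2 \<inter> verts G1 = {}" using disj by blast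
    have \<Gamma>': "\<Gamma> = (verts G2 \<union> verts G1, edges G2 \<union> edges G1 \<union> {{y, x}})"
      using \<Gamma> by (simp add: Un_commute insert_commute Un_left_commute)
    have xy': "y \<in> closed_nbhd \<Gamma> D \<or> x \<in> closed_nbhd \<Gamma> D" using xy by blast
    show ?thesis using side_S[OF P2 disj' E1 y xn \<Gamma>' sc2 xy' c c2] .
  qed
qed

lemma iota_le: "isolating G F D \<Longrightarrow> iota G F \<le> card D"
  unfolding iota_def by (rule Least_le) blast



context
  fixes F :: "'b graph" and G1 G2 \<Gamma> :: "'a graph" and q1 v1 Fs1 w1 T1 q2 v2 Fs2 w2 T2 x y
  assumes P1: "pdec F G1 q1 v1 Fs1 w1 T1" and P2: "pdec F G2 q2 v2 Fs2 w2 T2"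
    and disj: "verts G1 \<inter> verts G2 = {}" and x: "x \<in> verts G1" and y: "y \<in> verts G2"
    and \<Gamma>: "\<Gamma> = (verts G1 \<union> verts G2, edges G1 \<union> edges G2 \<union> {{x, y}})"
    and gF: "graph F" and dF: "dom_one F" and kF: "card (edges F) \<ge> 3"
begin

lemma vG: "verts \<Gamma> = verts G1 \<union> verts G2" using \<Gamma> by (simp add: verts_def)
lemma eG: "edges \<Gamma> = edges G1 \<union> edges G2 \<union> {{x, y}}" using \<Gamma> by (simp add: edges_def)

lemma yx_edge: "{y, x} \<in> edges \<Gamma>" using eG by (simp add: insert_commute)

lemma e1_sub: "e \<in> edges G1 \<Longrightarrow> e \<in> edges \<Gamma>" using eG by simp
lemma e2_sub: "e \<in> edges G2 \<Longrightarrow> e \<in> edges \<Gamma>" using eG by simp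

lemma UE1_sub: "l < q1 \<Longrightarrow> e \<in> UE v1 Fs1 w1 l \<Longrightarrow> e \<in> edges \<Gamma>"
  using e1_sub unfolding pE[OF P1] by blast
lemma UE2_sub: "l < q2 \<Longrightarrow> e \<in> UE v2 Fs2 w2 l \<Longrightarrow> e \<in> edges \<Gamma>"
  using e2_sub unfolding pE[OF P2] by blast

lemma U1_verts: "l < q1 \<Longrightarrow> U v1 Fs1 l \<subseteq> verts \<Gamma>" unfolding vG using pU_sub[OF P1] by blast
lemma U2_verts: "l < q2 \<Longrightarrow> U v2 Fs2 l \<subseteq> verts \<Gamma>" unfolding vG using pU_sub[OF P2] by blast

lemma vw1_N:
  assumes "l < q1" "v1 l \<in> D" shows "w1 l \<in> closed_nbhd \<Gamma> D"
proof (rule cn_nb[OF assms(2)])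
  show "{v1 l, w1 l} \<in> edges \<Gamma>" by (rule UE1_sub[OF assms(1) vw_in_UE[OF P1 gF dF kF]])
  show "w1 l \<in> verts \<Gamma>" using U1_verts[OF assms(1)] pw_in_U[OF P1 assms(1)] by (rule subsetD)
qed

lemma vw2_N:
  assumes "l < q2" "v2 l \<in> D" shows "w2 l \<in> closed_nbhd \<Gamma> D"
proof (rule cn_nb[OF assms(2)])
  show "{v2 l, w2 l} \<in> edges \<Gamma>" by (rule UE2_sub[OF assms(1) vw_in_UE[OF P2 gF dF kF]])
  show "w2 l \<in> verts \<Gamma>" using U2_verts[OF assms(1)] pw_in_U[OF P2 assms(1)] by (rule subsetD)
qed

lemma side1_all:
  assumes "v1 ` {..<q1} \<subseteq> D" shows "sidecond F q1 v1 Fs1 w1 T1 (closed_nbhd \<Gamma> D)"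
proof (rule side_allq[OF P1 gF dF kF])
  fix l assume l: "l < q1"
  have "v1 l \<in> D" using assms l by blast
  thus "v1 l \<in> closed_nbhd \<Gamma> D \<and> w1 l \<in> closed_nbhd \<Gamma> D" using subsetD[OF cn_D] vw1_N[OF l] by simp
qed

lemma side2_all:
  assumes "v2 ` {..<q2} \<subseteq> D" shows "sidecond F q2 v2 Fs2 w2 T2 (closed_nbhd \<Gamma> D)"
proof (rule side_allq[OF P2 gF dF kF])
  fix l assume l: "l < q2"
  have "v2 l \<in> D" using assms l by blast
  thus "v2 l \<in> closed_nbhd \<Gamma> D \<and> w2 l \<in> closed_nbhd \<Gamma> D" using subsetD[OF cn_D] vw2_N[OF l] by simp
qed

lemma x_N: "y \<in> D \<Longrightarrow> x \<in> closed_nbhd \<Gamma> D"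
proof -
  assume "y \<in> D"
  moreover have "x \<in> verts \<Gamma>" unfolding vG using x by blast
  ultimately show ?thesis by (rule cn_nb[OF _ yx_edge])
qed

lemma side1_A:
  assumes i: "i < q1" and xi: "x \<in> verts (Fs1 i)" and nb: "\<not> bad F q1 v1 Fs1 w1 x"
    and D: "v1 ` ({..<q1} - {i}) \<subseteq> D" "y \<in> D"
  shows "sidecond F q1 v1 Fs1 w1 T1 (closed_nbhd \<Gamma> D)"
proof (rule side_drop[OF P1 gF dF kF i])
  let ?N = "closed_nbhd \<Gamma> D"
  fix l assume l: "l < q1" "l \<noteq> i"
  have "v1 l \<in> D" using D(1) l by blast
  thus "v1 l \<in> ?N \<and> w1 l \<in> ?N" using subsetD[OF cn_D] vw1_N[OF l(1)] by simp
next
  let ?N = "closed_nbhd \<Gamma> D"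
  have xN: "x \<in> ?N" using x_N[OF D(2)] .
  show "\<not> contains_copy (udel v1 Fs1 w1 i ?N) F"
  proof (cases "q1 \<ge> 2")
    case True
    obtain l where l: "l < q1" "l \<noteq> i" "{v1 i, v1 l} \<in> edges T1" using ptree_nb[OF P1 gF dF kF True i] by blast
    have "v1 l \<in> D" using D(1) l by blast
    moreover have "{v1 l, v1 i} \<in> edges \<Gamma>" using l(3) e1_sub[of "{v1 i, v1 l}"] unfolding pE[OF P1] by (simp add: insert_commute)
    moreover have "v1 i \<in> verts \<Gamma>" using U1_verts[OF i] pv_in_U[OF P1 i] by blast
    ultimately have "v1 i \<in> ?N" by (rule cn_nb)
    thus ?thesis using unit_x[OF P1 gF dF kF i xi xN] by blast
  next
    case False
    hence q1: "q1 = 1" using pq[OF P1] by simp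
    hence i0: "i = 0" using i by simp
    have "\<not> contains_copy (udel v1 Fs1 w1 0 {x}) F" using nb q1 unfolding bad_def by simp
    moreover have "{x} \<subseteq> ?N" using xN by simp
    ultimately have "\<not> contains_copy (udel v1 Fs1 w1 0 ?N) F" using udel_mono[of "{x}" ?N] by blast
    thus ?thesis using i0 by simp
  qed
qed

lemma side2_A:
  assumes j: "j < q2" and yj: "y \<in> verts (Fs2 j)"
    and D: "v2 ` ({..<q2} - {j}) \<subseteq> D" "y \<in> D"
  shows "sidecond F q2 v2 Fs2 w2 T2 (closed_nbhd \<Gamma> D)"
proof (rule side_drop[OF P2 gF dF kF j])
  let ?N = "closed_nbhd \<Gamma> D"
  fix l assume l: "l < q2" "l \<noteq> j"
  have "v2 l \<in> D" using D(1) l by blast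
  thus "v2 l \<in> ?N \<and> w2 l \<in> ?N" using subsetD[OF cn_D] vw2_N[OF l(1)] by simp
next
  let ?N = "closed_nbhd \<Gamma> D"
  show "\<not> contains_copy (udel v2 Fs2 w2 j ?N) F"
  proof (rule unit_y[OF P2 gF dF kF j yj])
    show "y \<in> ?N" using D(2) by (rule subsetD[OF cn_D])
    fix z assume z: "{y, z} \<in> edges (Fs2 j)"
    have "{y, z} \<in> edges \<Gamma>" using UE2_sub[OF j edge_in_UE[OF P2 gF dF kF j z]] .
    moreover have "z \<in> verts \<Gamma>"
    proof -
      have "z \<in> verts (Fs2 j)" using graph_edge_sub[of "Fs2 j" "{y, z}"] pFs[OF P2 j] z by simp
      hence "z \<in> U v2 Fs2 j" unfolding U_def by simp
      thus ?thesis using U2_verts[OF j] by (rule rev_subsetD)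
    qed
    ultimately show "z \<in> ?N" by (rule cn_nb[OF D(2)])
  qed
qed

lemma v1_img: "v1 ` A \<subseteq> verts G1" if "A \<subseteq> {..<q1}" for A
  unfolding pV[OF P1] using that pv_in_U[OF P1] by blast
lemma v2_img: "v2 ` A \<subseteq> verts G2" if "A \<subseteq> {..<q2}" for A
  unfolding pV[OF P2] using that pv_in_U[OF P2] by blast

lemma card_v1: "A \<subseteq> {..<q1} \<Longrightarrow> card (v1 ` A) = card A"
  using card_image inj_on_subset pinj[OF P1] by metis
lemma card_v2: "A \<subseteq> {..<q2} \<Longrightarrow> card (v2 ` A) = card A"
  using card_image inj_on_subset pinj[OF P2] by metis

lemma roleQ:
  assumes i: "i < q1" "x = v1 i" and j: "j < q2" "y = v2 j"
  shows "iota \<Gamma> F \<le> q1 + q2"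
proof -
  define D where "D = v1 ` {..<q1} \<union> v2 ` {..<q2}"
  have Dsub: "D \<subseteq> verts \<Gamma>" unfolding D_def vG using v1_img[of "{..<q1}"] v2_img[of "{..<q2}"] by blast
  have "card D = q1 + q2"
  proof -
    have "v1 ` {..<q1} \<inter> v2 ` {..<q2} = {}" using v1_img[of "{..<q1}"] v2_img[of "{..<q2}"] disj by blast
    thus ?thesis unfolding D_def using card_v1[of "{..<q1}"] card_v2[of "{..<q2}"] by (subst card_Un_disjoint) auto
  qed
  moreover have "isolating \<Gamma> F D"
  proof (rule isolating_sides[OF P1 P2 disj x y \<Gamma> gF dF Dsub])
    show "sidecond F q1 v1 Fs1 w1 T1 (closed_nbhd \<Gamma> D)" by (rule side1_all) (simp add: D_def)
    show "sidecond F q2 v2 Fs2 w2 T2 (closed_nbhd \<Gamma> D)" by (rule side2_all) (simp add: D_def)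
    have "x \<in> D" unfolding D_def using i by blast
    hence "x \<in> closed_nbhd \<Gamma> D" by (rule subsetD[OF cn_D])
    thus "x \<in> closed_nbhd \<Gamma> D \<or> y \<in> closed_nbhd \<Gamma> D" by simp
  qed
  ultimately show ?thesis using iota_le[of \<Gamma> F D] by simp
qed

lemma roleA:
  assumes i: "i < q1" "x \<in> verts (Fs1 i)" and nb: "\<not> bad F q1 v1 Fs1 w1 x"
  shows "iota \<Gamma> F \<le> q1 + q2 - 1"
proof -
  have yG: "y \<in> (\<Union>l<q2. U v2 Fs2 l)" using y pV[OF P2] by simp
  then obtain j where j: "j < q2" "y \<in> U v2 Fs2 j" by blast
  have c1: "card (v1 ` ({..<q1} - {i})) = q1 - 1" using card_v1[of "{..<q1} - {i}"] i by simp
  have d1: "v1 ` ({..<q1} - {i}) \<subseteq> verts G1" using v1_img[of "{..<q1} - {i}"] by blast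
  show ?thesis
  proof (cases "y = v2 j")
    case True
    define D where "D = v1 ` ({..<q1} - {i}) \<union> v2 ` {..<q2}"
    have d2: "v2 ` {..<q2} \<subseteq> verts G2" using v2_img[of "{..<q2}"] by blast
    have Dsub: "D \<subseteq> verts \<Gamma>" unfolding D_def vG using d1 d2 by blast
    have yD: "y \<in> D" unfolding D_def using True j by blast
    have "card D = q1 - 1 + q2"
    proof -
      have "v1 ` ({..<q1} - {i}) \<inter> v2 ` {..<q2} = {}" using d1 d2 disj by blast
      thus ?thesis unfolding D_def using c1 card_v2[of "{..<q2}"] by (subst card_Un_disjoint) auto
    qed
    moreover have "isolating \<Gamma> F D"
    proof (rule isolating_sides[OF P1 P2 disj x y \<Gamma> gF dF Dsub])
      show "sidecond F q1 v1 Fs1 w1 T1 (closed_nbhd \<Gamma> D)"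
        by (rule side1_A[OF i nb _ yD]) (auto simp add: D_def)
      show "sidecond F q2 v2 Fs2 w2 T2 (closed_nbhd \<Gamma> D)" by (rule side2_all) (simp add: D_def)
      show "x \<in> closed_nbhd \<Gamma> D \<or> y \<in> closed_nbhd \<Gamma> D" using x_N[OF yD] by blast
    qed
    ultimately show ?thesis using iota_le[of \<Gamma> F D] pq[OF P1] by simp
  next
    case False
    hence yj: "y \<in> verts (Fs2 j)" using j unfolding U_def by simp
    define D where "D = v1 ` ({..<q1} - {i}) \<union> (v2 ` ({..<q2} - {j}) \<union> {y})"
    have d2: "v2 ` ({..<q2} - {j}) \<subseteq> verts G2" using v2_img[of "{..<q2} - {j}"] by blast
    have Dsub: "D \<subseteq> verts \<Gamma>" unfolding D_def vG using d1 d2 y by blast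
    have yD: "y \<in> D" unfolding D_def by blast
    have "card D = q1 - 1 + (q2 - 1 + 1)"
    proof -
      have yn: "y \<notin> v2 ` ({..<q2} - {j})" using pvnot[OF P2 j(1)] yj by auto
      have c2: "card (v2 ` ({..<q2} - {j}) \<union> {y}) = q2 - 1 + 1"
        using card_v2[of "{..<q2} - {j}"] j yn by simp
      have "v1 ` ({..<q1} - {i}) \<inter> (v2 ` ({..<q2} - {j}) \<union> {y}) = {}" using d1 d2 disj y by blast
      thus ?thesis unfolding D_def using c1 c2 by (subst card_Un_disjoint) auto
    qed
    moreover have "isolating \<Gamma> F D"
    proof (rule isolating_sides[OF P1 P2 disj x y \<Gamma> gF dF Dsub])
      show "sidecond F q1 v1 Fs1 w1 T1 (closed_nbhd \<Gamma> D)"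
        by (rule side1_A[OF i nb _ yD]) (auto simp add: D_def)
      show "sidecond F q2 v2 Fs2 w2 T2 (closed_nbhd \<Gamma> D)"
        by (rule side2_A[OF j(1) yj _ yD]) (auto simp add: D_def)
      show "x \<in> closed_nbhd \<Gamma> D \<or> y \<in> closed_nbhd \<Gamma> D" using x_N[OF yD] by blast
    qed
    ultimately show ?thesis using iota_le[of \<Gamma> F D] pq[OF P1] pq[OF P2] by simp
  qed
qed

end



lemma copy_iso:
  assumes c: "contains_copy L F" and gL: "graph L" and gF: "graph F"
    and cv: "card (verts L) = card (verts F)" and ce: "card (edges L) \<le> card (edges F)"
  shows "iso L F"
proof -
  obtain f where f: "inj_on f (verts F)" "f ` verts F \<subseteq> verts L" "\<forall>e\<in>edges F. f ` e \<in> edges L"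
    using c unfolding contains_copy_def by blast
  have finL: "finite (verts L)" using gL unfolding graph_def by simp
  have "card (f ` verts F) = card (verts L)" using card_image[OF f(1)] cv by simp
  hence img: "f ` verts F = verts L" using card_subset_eq[OF finL f(2)] by simp
  have bij: "bij_betw f (verts F) (verts L)" unfolding bij_betw_def using f(1) img by simp
  have ip: "inj_on ((`) f) (Pow (verts F))" using f(1) inj_on_image_Pow by blast
  have eP: "edges F \<subseteq> Pow (verts F)" using graph_edge_sub[OF gF] by blast
  have ie: "inj_on ((`) f) (edges F)" using inj_on_subset[OF ip eP] .
  have sub: "(`) f ` edges F \<subseteq> edges L" using f(3) by blast
  have finEL: "finite (edges L)" using graph_finite_edges[OF gL] .
  have "card ((`) f ` edges F) = card (edges F)" using card_image[OF ie] .
  hence "card ((`) f ` edges F) \<ge> card (edges L)" using ce by simp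
  hence eimg: "(`) f ` edges F = edges L"
    using card_seteq[OF finEL sub] by simp
  have "\<forall>u\<in>verts F. \<forall>v\<in>verts F. {u, v} \<in> edges F \<longleftrightarrow> {f u, f v} \<in> edges L"
  proof (intro ballI iffI)
    fix u v assume u: "u \<in> verts F" and v: "v \<in> verts F"
    { assume "{u, v} \<in> edges F"
      hence "f ` {u, v} \<in> edges L" using f(3) by blast
      thus "{f u, f v} \<in> edges L" by simp }
    { assume "{f u, f v} \<in> edges L"
      hence "f ` {u, v} \<in> (`) f ` edges F" using eimg by simp
      then obtain e where e: "e \<in> edges F" "f ` {u, v} = f ` e" by auto
      have "{u, v} \<in> Pow (verts F)" using u v by simp
      moreover have "e \<in> Pow (verts F)" using eP e(1) by blast
      ultimately have "{u, v} = e" using ip e(2) by (meson inj_onD)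
      thus "{u, v} \<in> edges F" using e(1) by simp }
  qed
  hence "iso F L" unfolding iso_def using bij by blast
  thus ?thesis by (rule iso_sym)
qed

lemma lessThan_1: "{..<(1::nat)} = {0}" by auto
lemma lessThan_Suc0: "{..<Suc 0} = {0}" by auto

lemma redecomp:
  assumes P: "pdec F G 1 v Fs w T" and gF: "graph F" and dF: "dom_one F" and kF: "card (edges F) \<ge> 3"
    and x: "x \<in> verts (Fs 0)" and cc: "contains_copy (udel v Fs w 0 {x}) F"
  shows "\<exists>v' Fs' w' T'. pdec F G 1 v' Fs' w' T' \<and> v' 0 = x"
proof -
  define L where "L = udel v Fs w 0 {x}"
  have vL: "verts L = U v Fs 0 - {x}" and eL: "edges L = {e \<in> UE v Fs w 0. e \<inter> {x} = {}}"
    unfolding L_def udel_def verts_def edges_def by simp_all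
  have z0: "(0::nat) < 1" by simp
  have gFs: "graph (Fs 0)" "iso (Fs 0) F" "w 0 \<in> verts (Fs 0)" using pFs[OF P z0] by simp_all
  have xU: "x \<in> U v Fs 0" unfolding U_def using x by simp
  have v0: "v 0 \<notin> verts (Fs 0)" using pvnot[OF P z0 z0] .
  have finU: "finite (U v Fs 0)" unfolding U_def using gFs(1) unfolding graph_def by simp
  have finUE: "finite (UE v Fs w 0)" unfolding UE_def using graph_finite_edges[OF gFs(1)] by simp
  have gL: "graph L"
    unfolding graph_def
  proof
    show "finite (verts L)" using vL finU by simp
    show "\<forall>e\<in>edges L. \<exists>a b. e = {a, b} \<and> a \<noteq> b \<and> a \<in> verts L \<and> b \<in> verts L"
    proof
      fix e assume "e \<in> edges L"
      hence e: "e \<in> UE v Fs w 0" "x \<notin> e" using eL by auto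
      obtain a b where ab: "e = {a, b}" "a \<noteq> b" using pUE_pair[OF P z0 e(1)] by blast
      have "e \<subseteq> U v Fs 0" using pUE_sub[OF P z0 e(1)] .
      hence "a \<in> verts L" "b \<in> verts L" unfolding vL using ab e(2) by auto
      thus "\<exists>a b. e = {a, b} \<and> a \<noteq> b \<and> a \<in> verts L \<and> b \<in> verts L" using ab by blast
    qed
  qed
  have cvL: "card (verts L) = card (verts F)"
  proof -
    have "card (verts L) = card (U v Fs 0) - 1" using vL xU finU by simp
    also have "card (U v Fs 0) = card (verts (Fs 0)) + 1"
      unfolding U_def using v0 gFs(1) unfolding graph_def by simp
    finally show ?thesis using iso_card_verts[OF gFs(2)] by simp
  qed
  obtain z0' where z0': "{x, z0'} \<in> edges (Fs 0)"
    using dom_vertex_has_edge[of "Fs 0" x] gFs pFs_dom[OF P gF dF kF z0] pFs_card[OF P gF dF kF z0] x by auto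
  have ceL: "card (edges L) \<le> card (edges F)"
  proof -
    have "edges L \<subseteq> UE v Fs w 0 - {{x, z0'}}" using eL by auto
    moreover have "{x, z0'} \<in> UE v Fs w 0" using z0' unfolding UE_def by simp
    ultimately have "card (edges L) \<le> card (UE v Fs w 0) - 1"
      using card_mono[of "UE v Fs w 0 - {{x, z0'}}" "edges L"] finUE by simp
    thus ?thesis using pUE_card[OF P z0 gF] by simp
  qed
  have isoL: "iso L F" using copy_iso[OF cc[folded L_def] gL gF cvL ceL] .
  have ckL: "card (edges L) = card (edges F)" using iso_card_edges[OF isoL gL gF] .
  define X where "X = {e \<in> UE v Fs w 0. x \<in> e}"
  have UEs: "UE v Fs w 0 = edges L \<union> X" and dLX: "edges L \<inter> X = {}" unfolding X_def using eL by auto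
  have finX: "finite X" using finUE UEs by simp
  have "card (UE v Fs w 0) = card (edges L) + card X"
    using UEs dLX card_Un_disjoint[of "edges L" X] finX finUE by simp
  hence "card X = 1" using pUE_card[OF P z0 gF] ckL by simp
  then obtain e1 where X1: "X = {e1}" using card_1_singletonE by blast
  have e1: "e1 \<in> UE v Fs w 0" "x \<in> e1" using X1 unfolding X_def by auto
  obtain a b where ab: "e1 = {a, b}" "a \<noteq> b" using pUE_pair[OF P z0 e1(1)] by blast
  have "\<exists>z. e1 = {x, z} \<and> z \<noteq> x"
  proof (cases "a = x")
    case True thus ?thesis using ab by (intro exI[of _ b]) simp
  next
    case False
    hence "b = x" using ab e1(2) by simp
    thus ?thesis using ab False by (intro exI[of _ a]) (simp add: insert_commute)
  qed
  then obtain z where e1z: "e1 = {x, z}" "z \<noteq> x" by blast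
  have "z \<in> e1" using e1z(1) by simp
  hence zU: "z \<in> U v Fs 0" using pUE_sub[OF P z0 e1(1)] by blast
  have zL: "z \<in> verts L" using vL zU e1z(2) by simp
  have eT: "edges T = {}"
  proof (rule ccontr)
    assume "edges T \<noteq> {}"
    then obtain e where "e \<in> edges T" by blast
    then obtain c d where "e = {c, d}" "c \<noteq> d" "c \<in> v ` {..<1}" "d \<in> v ` {..<1}" using pT_edge[OF P] by blast
    thus False by (simp add: lessThan_1 lessThan_Suc0)
  qed
  have newG: "G = ((\<Union>i<1. U (\<lambda>_. x) (\<lambda>_. L) i), edges ({x}, {}) \<union> (\<Union>i<1. UE (\<lambda>_. x) (\<lambda>_. L) (\<lambda>_. z) i))"
  proof -
    have "G = (verts G, edges G)" by (simp add: verts_def edges_def)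
    also have "verts G = U v Fs 0" using pV[OF P] by (simp add: lessThan_1 lessThan_Suc0)
    also have "edges G = UE v Fs w 0" using pE[OF P] eT by (simp add: lessThan_1 lessThan_Suc0)
    also have "U v Fs 0 = U (\<lambda>_. x) (\<lambda>_. L) 0"
    proof -
      have "U (\<lambda>_. x) (\<lambda>_. L) 0 = insert x (verts L)" by (simp add: U_def)
      also have "\<dots> = U v Fs 0" unfolding vL using xU by (rule insert_Diff)
      finally show ?thesis by simp
    qed
    also have "UE v Fs w 0 = UE (\<lambda>_. x) (\<lambda>_. L) (\<lambda>_. z) 0"
    proof -
      have "UE (\<lambda>_. x) (\<lambda>_. L) (\<lambda>_. z) 0 = insert {x, z} (edges L)" by (simp add: UE_def)
      moreover have "UE v Fs w 0 = insert {x, z} (edges L)" unfolding UEs X1 e1z(1) by simp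
      ultimately show ?thesis by simp
    qed
    finally show ?thesis by (simp add: lessThan_1 lessThan_Suc0 edges_def)
  qed
  have "pdec F G 1 (\<lambda>_. x) (\<lambda>_. L) (\<lambda>_. z) ({x}, {})"
    unfolding pdec_def
    using gL isoL zL vL single_tree[of x] newG
    by (simp add: lessThan_1 lessThan_Suc0 verts_def)
  thus ?thesis by blast
qed

lemma choose_side:
  assumes P: "pdec F G q v Fs w T" and gF: "graph F" and dF: "dom_one F" and kF: "card (edges F) \<ge> 3"
    and x: "x \<in> verts G"
  shows "(\<exists>v' Fs' w' T' i. pdec F G q v' Fs' w' T' \<and> i < q \<and> x = v' i) \<or>
         (\<exists>i<q. x \<in> verts (Fs i) \<and> \<not> bad F q v Fs w x)"
proof -
  obtain l where l: "l < q" "x \<in> U v Fs l" using x pV[OF P] by auto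
  show ?thesis
  proof (cases "x = v l")
    case True thus ?thesis using P l(1) by blast
  next
    case False
    hence xl: "x \<in> verts (Fs l)" using l(2) unfolding U_def by simp
    show ?thesis
    proof (cases "bad F q v Fs w x")
      case False thus ?thesis using xl l(1) by blast
    next
      case True
      hence q1: "q = 1" and cc: "contains_copy (udel v Fs w 0 {x}) F" unfolding bad_def by simp_all
      hence l0: "l = 0" using l(1) by simp
      have P': "pdec F G 1 v Fs w T" using P q1 by simp
      obtain v' Fs' w' T' where "pdec F G 1 v' Fs' w' T'" "v' 0 = x"
        using redecomp[OF P' gF dF kF _ cc] xl l0 by blast
      thus ?thesis using q1 by (intro disjI1 exI[of _ v'] exI[of _ Fs'] exI[of _ w'] exI[of _ T'] exI[of _ 0]) simp
    qed
  qed
qed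



lemma UN_split:
  fixes f :: "nat \<Rightarrow> 'x set"
  shows "(\<Union>l\<in>{..<a+b}. f l) = (\<Union>l\<in>{..<a}. f l) \<union> (\<Union>l\<in>{..<b}. f (a + l))"
proof
  show "(\<Union>l\<in>{..<a+b}. f l) \<subseteq> (\<Union>l\<in>{..<a}. f l) \<union> (\<Union>l\<in>{..<b}. f (a + l))"
  proof
    fix t assume "t \<in> (\<Union>l\<in>{..<a+b}. f l)"
    then obtain l where l: "l < a + b" "t \<in> f l" by auto
    show "t \<in> (\<Union>l\<in>{..<a}. f l) \<union> (\<Union>l\<in>{..<b}. f (a + l))"
    proof (cases "l < a")
      case True thus ?thesis using l by auto
    next
      case False
      hence "l - a < b" "a + (l - a) = l" using l(1) by auto
      thus ?thesis using l(2) by (metis UN_iff UnI2 lessThan_iff)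
    qed
  qed
  show "(\<Union>l\<in>{..<a}. f l) \<union> (\<Union>l\<in>{..<b}. f (a + l)) \<subseteq> (\<Union>l\<in>{..<a+b}. f l)"
  proof
    fix t assume "t \<in> (\<Union>l\<in>{..<a}. f l) \<union> (\<Union>l\<in>{..<b}. f (a + l))"
    thus "t \<in> (\<Union>l\<in>{..<a+b}. f l)"
    proof
      assume "t \<in> (\<Union>l\<in>{..<a}. f l)"
      then obtain l where "l < a" "t \<in> f l" by auto
      thus ?thesis by (intro UN_I[of l]) auto
    next
      assume "t \<in> (\<Union>l\<in>{..<b}. f (a + l))"
      then obtain l where "l < b" "t \<in> f (a + l)" by auto
      thus ?thesis by (intro UN_I[of "a + l"]) auto
    qed
  qed
qed

lemma img_split:
  fixes g :: "nat \<Rightarrow> 'x"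
  shows "g ` {..<a+b} = g ` {..<a} \<union> (\<lambda>l. g (a + l)) ` {..<b}"
proof -
  have "g ` {..<a+b} = (\<Union>l\<in>{..<a+b}. {g l})" by auto
  also have "\<dots> = (\<Union>l\<in>{..<a}. {g l}) \<union> (\<Union>l\<in>{..<b}. {g (a + l)})" by (rule UN_split)
  also have "\<dots> = g ` {..<a} \<union> (\<lambda>l. g (a + l)) ` {..<b}" by auto
  finally show ?thesis .
qed

lemma join:
  assumes P1: "pdec F G1 q1 v1 Fs1 w1 T1" and P2: "pdec F G2 q2 v2 Fs2 w2 T2"
    and disj: "verts G1 \<inter> verts G2 = {}"
    and i: "i < q1" "x = v1 i" and j: "j < q2" "y = v2 j"
    and \<Gamma>: "\<Gamma> = (verts G1 \<union> verts G2, edges G1 \<union> edges G2 \<union> {{x, y}})"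
  shows "\<exists>V FS W T. pdec F \<Gamma> (q1 + q2) V FS W T"
proof -
  define V where "V l = (if l < q1 then v1 l else v2 (l - q1))" for l
  define FS where "FS l = (if l < q1 then Fs1 l else Fs2 (l - q1))" for l
  define W where "W l = (if l < q1 then w1 l else w2 (l - q1))" for l
  define T where "T = (verts T1 \<union> verts T2, edges T1 \<union> edges T2 \<union> {{x, y}})"
  have v1G: "v1 l \<in> verts G1" if "l < q1" for l using pV[OF P1] pv_in_U[OF P1 that] that by auto
  have v2G: "v2 l \<in> verts G2" if "l < q2" for l using pV[OF P2] pv_in_U[OF P2 that] that by auto
  have F1G: "verts (Fs1 l) \<subseteq> verts G1" if "l < q1" for l using pV[OF P1] that unfolding U_def by auto
  have F2G: "verts (Fs2 l) \<subseteq> verts G2" if "l < q2" for l using pV[OF P2] that unfolding U_def by auto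
  have c1: "1 \<le> q1 + q2" using pq[OF P1] by simp
  have c2: "inj_on V {..<q1 + q2}"
  proof (rule inj_onI)
    fix a b assume a: "a \<in> {..<q1 + q2}" and b: "b \<in> {..<q1 + q2}" and e: "V a = V b"
    show "a = b"
    proof (cases "a < q1")
      case True
      show ?thesis
      proof (cases "b < q1")
        case True
        thus ?thesis using `a < q1` e pinj[OF P1] unfolding V_def by (simp add: inj_on_eq_iff)
      next
        case False
        have "v1 a \<in> verts G1" using v1G `a < q1` by simp
        moreover have "v2 (b - q1) \<in> verts G2" using v2G b False by simp
        ultimately show ?thesis using e disj `a < q1` False unfolding V_def by auto
      qed
    next
      case af: False
      show ?thesis
      proof (cases "b < q1")
        case True
        have "v1 b \<in> verts G1" using v1G True by simp
        moreover have "v2 (a - q1) \<in> verts G2" using v2G a af by simp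
        ultimately show ?thesis using e disj True af unfolding V_def by auto
      next
        case False
        have "v2 (a - q1) = v2 (b - q1)" using e af False unfolding V_def by simp
        moreover have "a - q1 < q2" "b - q1 < q2" using a b af False by auto
        ultimately have "a - q1 = b - q1" using pinj[OF P2] by (simp add: inj_on_eq_iff)
        thus ?thesis using af False by simp
      qed
    qed
  qed
  have c3: "\<forall>l<q1 + q2. graph (FS l) \<and> iso (FS l) F \<and> W l \<in> verts (FS l)"
  proof (intro allI impI)
    fix l assume l: "l < q1 + q2"
    show "graph (FS l) \<and> iso (FS l) F \<and> W l \<in> verts (FS l)"
    proof (cases "l < q1")
      case True thus ?thesis using pFs[OF P1 True] unfolding FS_def W_def by simp
    next
      case False
      hence "l - q1 < q2" using l by simp
      thus ?thesis using pFs[OF P2] False unfolding FS_def W_def by simp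
    qed
  qed
  have c4: "\<forall>a<q1 + q2. \<forall>b<q1 + q2. a \<noteq> b \<longrightarrow> verts (FS a) \<inter> verts (FS b) = {}"
  proof (intro allI impI)
    fix a b assume a: "a < q1 + q2" and b: "b < q1 + q2" and ab: "a \<noteq> b"
    show "verts (FS a) \<inter> verts (FS b) = {}"
    proof (cases "a < q1")
      case True
      show ?thesis
      proof (cases "b < q1")
        case True thus ?thesis using `a < q1` ab pdisj[OF P1] unfolding FS_def by simp
      next
        case False
        have "verts (Fs2 (b - q1)) \<subseteq> verts G2" using F2G b False by simp
        thus ?thesis using F1G[OF `a < q1`] disj `a < q1` False unfolding FS_def by auto
      qed
    next
      case af: False
      show ?thesis
      proof (cases "b < q1")
        case True
        have "verts (Fs2 (a - q1)) \<subseteq> verts G2" using F2G a af by simp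
        thus ?thesis using F1G[OF True] disj True af unfolding FS_def by auto
      next
        case False
        have "a - q1 < q2" "b - q1 < q2" "a - q1 \<noteq> b - q1" using a b af False ab by auto
        thus ?thesis using pdisj[OF P2] af False unfolding FS_def by simp
      qed
    qed
  qed
  have c5: "\<forall>a<q1 + q2. \<forall>b<q1 + q2. V b \<notin> verts (FS a)"
  proof (intro allI impI)
    fix a b assume a: "a < q1 + q2" and b: "b < q1 + q2"
    show "V b \<notin> verts (FS a)"
    proof (cases "a < q1")
      case True
      show ?thesis
      proof (cases "b < q1")
        case True thus ?thesis using `a < q1` pvnot[OF P1] unfolding FS_def V_def by simp
      next
        case False
        have "v2 (b - q1) \<in> verts G2" using v2G b False by simp
        thus ?thesis using F1G[OF `a < q1`] disj `a < q1` False unfolding FS_def V_def by auto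
      qed
    next
      case af: False
      show ?thesis
      proof (cases "b < q1")
        case True
        have "verts (Fs2 (a - q1)) \<subseteq> verts G2" using F2G a af by simp
        thus ?thesis using v1G[OF True] disj True af unfolding FS_def V_def by auto
      next
        case False
        have "a - q1 < q2" "b - q1 < q2" using a b af False by auto
        thus ?thesis using pvnot[OF P2] af False unfolding FS_def V_def by simp
      qed
    qed
  qed
  have vT1: "verts T1 = v1 ` {..<q1}" and vT2: "verts T2 = v2 ` {..<q2}" using pT[OF P1] pT[OF P2] by simp_all
  have s1: "verts T1 \<subseteq> verts G1" unfolding vT1 using v1G by auto
  have s2: "verts T2 \<subseteq> verts G2" unfolding vT2 using v2G by auto
  have dT: "verts T1 \<inter> verts T2 = {}" using Int_mono[OF s1 s2] disj by simp
  have xT: "x \<in> verts T1" unfolding vT1 using i by simp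
  have yT: "y \<in> verts T2" unfolding vT2 using j by simp
  have c6: "graph T \<and> tree T"
    using tree_join[OF pT(1,2)[OF P1] pT(1,2)[OF P2] dT xT yT] T_def by simp
  have Vimg: "V ` {..<q1 + q2} = v1 ` {..<q1} \<union> v2 ` {..<q2}"
  proof -
    have "V ` {..<q1 + q2} = V ` {..<q1} \<union> (\<lambda>l. V (q1 + l)) ` {..<q2}" by (rule img_split)
    moreover have "V ` {..<q1} = v1 ` {..<q1}" unfolding V_def by auto
    moreover have "(\<lambda>l. V (q1 + l)) ` {..<q2} = v2 ` {..<q2}" unfolding V_def by auto
    ultimately show ?thesis by simp
  qed
  have c7: "verts T = V ` {..<q1 + q2}" unfolding Vimg T_def verts_def using vT1 vT2 by (simp add: verts_def)
  have Uu: "(\<Union>l<q1 + q2. U V FS l) = verts G1 \<union> verts G2"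
  proof -
    have "(\<Union>l<q1 + q2. U V FS l) = (\<Union>l<q1. U V FS l) \<union> (\<Union>l<q2. U V FS (q1 + l))" by (rule UN_split)
    moreover have "(\<Union>l<q1. U V FS l) = (\<Union>l<q1. U v1 Fs1 l)" unfolding U_def V_def FS_def by auto
    moreover have "(\<Union>l<q2. U V FS (q1 + l)) = (\<Union>l<q2. U v2 Fs2 l)" unfolding U_def V_def FS_def by auto
    ultimately show ?thesis using pV[OF P1] pV[OF P2] by simp
  qed
  have UEu: "edges T \<union> (\<Union>l<q1 + q2. UE V FS W l) = edges G1 \<union> edges G2 \<union> {{x, y}}"
  proof -
    have "(\<Union>l<q1 + q2. UE V FS W l) = (\<Union>l<q1. UE V FS W l) \<union> (\<Union>l<q2. UE V FS W (q1 + l))" by (rule UN_split)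
    moreover have "(\<Union>l<q1. UE V FS W l) = (\<Union>l<q1. UE v1 Fs1 w1 l)" unfolding UE_def V_def FS_def W_def by auto
    moreover have "(\<Union>l<q2. UE V FS W (q1 + l)) = (\<Union>l<q2. UE v2 Fs2 w2 l)" unfolding UE_def V_def FS_def W_def by auto
    moreover have "edges T = edges T1 \<union> edges T2 \<union> {{x, y}}" unfolding T_def by (simp add: edges_def)
    ultimately show ?thesis using pE[OF P1] pE[OF P2] by auto
  qed
  have c8: "\<Gamma> = ((\<Union>l<q1 + q2. U V FS l), edges T \<union> (\<Union>l<q1 + q2. UE V FS W l))"
    unfolding Uu UEu using \<Gamma> by simp
  have "pdec F \<Gamma> (q1 + q2) V FS W T"
    unfolding pdec_def by (intro conjI c1 c2 c3 c4 c5 c7 c8 c6[THEN conjunct1] c6[THEN conjunct2])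
  thus ?thesis by blast
qed



theorem lemma3p6:
  fixes F :: "'b graph" and \<Gamma>1 \<Gamma>2 :: "'a graph" and k m1 m2 :: nat and x y :: 'a
  assumes "k \<ge> 3"
    and "graph F" and "card (edges F) = k" and "dom_one F"
    and "pure_special m1 F \<Gamma>1" and "pure_special m2 F \<Gamma>2"
    and "verts \<Gamma>1 \<inter> verts \<Gamma>2 = {}"
    and "x \<in> verts \<Gamma>1" and "y \<in> verts \<Gamma>2"
    and "\<Gamma> = (verts \<Gamma>1 \<union> verts \<Gamma>2, edges \<Gamma>1 \<union> edges \<Gamma>2 \<union> {{x, y}})"
    and "m = card (edges \<Gamma>)"
    and "real (iota \<Gamma> F) = real (m + 1) / real (k + 2)"
  shows "special m F \<Gamma>"
proof -
  note gF = assms(2) and dF = assms(4) and disj = assms(7) and x = assms(8) and y = assms(9) and \<Gamma> = assms(10)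
  have kF: "card (edges F) \<ge> 3" using assms(1,3) by simp
  obtain q1 where "special_constr m1 F \<Gamma>1 q1 0" using assms(5) unfolding pure_special_def by blast
  then obtain v1 Fs1 w1 T1 where P1: "pdec F \<Gamma>1 q1 v1 Fs1 w1 T1" using pure_to_pdec by metis
  obtain q2 where "special_constr m2 F \<Gamma>2 q2 0" using assms(6) unfolding pure_special_def by blast
  then obtain v2 Fs2 w2 T2 where P2: "pdec F \<Gamma>2 q2 v2 Fs2 w2 T2" using pure_to_pdec by metis
  have eG: "edges \<Gamma> = edges \<Gamma>1 \<union> edges \<Gamma>2 \<union> {{x, y}}" using \<Gamma> by (simp add: edges_def)
  have fin1: "finite (edges \<Gamma>1)" using graph_finite_edges[OF pgraph[OF P1]] .
  have fin2: "finite (edges \<Gamma>2)" using graph_finite_edges[OF pgraph[OF P2]] .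
  have d12: "edges \<Gamma>1 \<inter> edges \<Gamma>2 = {}"
  proof (rule ccontr)
    assume "edges \<Gamma>1 \<inter> edges \<Gamma>2 \<noteq> {}"
    then obtain e where e: "e \<in> edges \<Gamma>1" "e \<in> edges \<Gamma>2" by blast
    have "e \<subseteq> verts \<Gamma>1" "e \<subseteq> verts \<Gamma>2" using pE_sub[OF P1 e(1)] pE_sub[OF P2 e(2)] by simp_all
    moreover have "e \<noteq> {}" using pedge_ne[OF P1 e(1)] .
    ultimately show False using disj by blast
  qed
  have xy1: "{x, y} \<notin> edges \<Gamma>1"
  proof
    assume "{x, y} \<in> edges \<Gamma>1"
    hence "y \<in> verts \<Gamma>1" using pE_sub[OF P1] by blast
    thus False using y disj by blast
  qed
  have xy2: "{x, y} \<notin> edges \<Gamma>2"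
  proof
    assume "{x, y} \<in> edges \<Gamma>2"
    hence "x \<in> verts \<Gamma>2" using pE_sub[OF P2] by blast
    thus False using x disj by blast
  qed
  have cE: "card (edges \<Gamma>) = card (edges \<Gamma>1) + card (edges \<Gamma>2) + 1"
  proof -
    have "card (edges \<Gamma>1 \<union> edges \<Gamma>2) = card (edges \<Gamma>1) + card (edges \<Gamma>2)"
      using card_Un_disjoint[OF fin1 fin2 d12] .
    moreover have "{x, y} \<notin> edges \<Gamma>1 \<union> edges \<Gamma>2" using xy1 xy2 by simp
    ultimately show ?thesis unfolding eG using fin1 fin2 by simp
  qed
  have low: "(q1 + q2) * (k + 2) \<le> m + 1"
    using pcard_lower[OF P1 gF] pcard_lower[OF P2 gF] cE assms(3,11) by (simp add: algebra_simps)
  have ieq: "iota \<Gamma> F * (k + 2) = m + 1"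
  proof -
    have "real (iota \<Gamma> F) * real (k + 2) = real (m + 1)"
      using assms(12) by (simp add: field_simps)
    hence "real (iota \<Gamma> F * (k + 2)) = real (m + 1)" by (simp only: of_nat_mult)
    thus ?thesis by (simp only: of_nat_eq_iff)
  qed
  have q1p: "q1 \<ge> 1" using pq[OF P1] .
  have q2p: "q2 \<ge> 1" using pq[OF P2] .
  have contra: False if "iota \<Gamma> F \<le> q1 + q2 - 1"
  proof -
    have "iota \<Gamma> F * (k + 2) \<le> (q1 + q2 - 1) * (k + 2)" using that by (rule mult_le_mono1)
    moreover have "(q1 + q2 - 1) * (k + 2) < (q1 + q2) * (k + 2)"
    proof (rule mult_less_mono1)
      show "q1 + q2 - 1 < q1 + q2" using q1p by simp
      show "0 < k + 2" by simp
    qed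
    ultimately show False using low ieq by simp
  qed
  have \<Gamma>': "\<Gamma> = (verts \<Gamma>2 \<union> verts \<Gamma>1, edges \<Gamma>2 \<union> edges \<Gamma>1 \<union> {{y, x}})"
    using \<Gamma> by (simp add: Un_commute insert_commute)
  have disj': "verts \<Gamma>2 \<inter> verts \<Gamma>1 = {}" using disj by blast
  have x1: "x \<in> verts \<Gamma>1" using x .
  have y2: "y \<in> verts \<Gamma>2" using y .
  show ?thesis
  proof (cases "\<exists>i<q1. x \<in> verts (Fs1 i) \<and> \<not> bad F q1 v1 Fs1 w1 x")
    case True
    then obtain i where i: "i < q1" "x \<in> verts (Fs1 i)" "\<not> bad F q1 v1 Fs1 w1 x" by blast
    have "iota \<Gamma> F \<le> q1 + q2 - 1" using roleA[OF P1 P2 disj x y \<Gamma> gF dF kF i] .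
    thus ?thesis using contra by blast
  next
    case False
    then obtain v1' Fs1' w1' T1' i where P1': "pdec F \<Gamma>1 q1 v1' Fs1' w1' T1'" and i: "i < q1" "x = v1' i"
      using choose_side[OF P1 gF dF kF x1] by blast
    show ?thesis
    proof (cases "\<exists>j<q2. y \<in> verts (Fs2 j) \<and> \<not> bad F q2 v2 Fs2 w2 y")
      case True
      then obtain j where j: "j < q2" "y \<in> verts (Fs2 j)" "\<not> bad F q2 v2 Fs2 w2 y" by blast
      have "iota \<Gamma> F \<le> q2 + q1 - 1" using roleA[OF P2 P1 disj' y x \<Gamma>' gF dF kF j] .
      hence "iota \<Gamma> F \<le> q1 + q2 - 1" by (simp add: add.commute)
      thus ?thesis using contra by blast
    next
      case False
      then obtain v2' Fs2' w2' T2' j where P2': "pdec F \<Gamma>2 q2 v2' Fs2' w2' T2'" and j: "j < q2" "y = v2' j"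
        using choose_side[OF P2 gF dF kF y2] by blast
      have "iota \<Gamma> F \<le> q1 + q2" using roleQ[OF P1' P2' disj x y \<Gamma> gF dF kF i j] .
      hence "iota \<Gamma> F * (k + 2) \<le> (q1 + q2) * (k + 2)" by (rule mult_le_mono1)
      hence meq: "m + 1 = (q1 + q2) * (card (edges F) + 2)" using low ieq assms(3) by simp
      obtain V FS W T where "pdec F \<Gamma> (q1 + q2) V FS W T" using join[OF P1' P2' disj i j \<Gamma>] by blast
      thus ?thesis using pdec_to_special meq by blast
    qed
  qed
qed


end
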